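(* Let $X$ be a finite nonempty set and $p=2|X|-1$. Let $M(t,k)$ denote the set of elements of $\mathrm{FIM}(X)$ with $t$ trunk edges and $k$ branch edges. For $t\geq 1$ and $k\geq 0$, \[|M(t,k)|=(p+1)p^{t-1}R_{p,\,2p+(t-1)(p-1)}(k),\] and for $k\ge 0$, \[|M(0,k)|=\frac{p+1}{kp+p+1}\binom{kp+p+1}{k}.\] Consequently, for every integer $K\geq 0$, the sphere $S(K)$ of radius $K$ in $\mathrm{FIM}(X)$ satisfies \[|S(K)|=\varepsilon_K\cdot\frac{p+1}{\tfrac12Kp+p+1}\binom{\tfrac12Kp+p+1}{\tfrac12K}+\sum_{\substack{t+2k=K\\ t\ge1,\ k\ge0}}(p+1)p^{t-1}\frac{2p+(t-1)(p-1)}{kp+2p+(t-1)(p-1)}\binom{kp+2p+(t-1)(p-1)}{k},\] where $\varepsilon_K=1$ if $K$ is even and $\varepsilon_K=0$ if $K$ is odd.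
   Context: $\mathrm{FIM}(X)$ is the free inverse monoid on $X$, generated as a monoid by $X\cup X^{-1}$. Elements are identified (Munn's model) with pairs $(T,g)$, where $T$ is a finite connected subgraph, containing $1$, of the Cayley graph $\Gamma_X$ of the free group $\mathrm{FG}(X)$ with respect to $X$, and $g$ is a vertex of $T$. The trunk of $(T,g)$ is the geodesic in $T$ from $1$ to $g$. Branch edges are the edges of $T$ not on the trunk. The length of an element is the minimal length of a word over $X\cup X^{-1}$ representing it. $S(K)$ is the set of elements of length exactly $K$. $R_{p,q}(k)=\frac{q}{kp+q}\binom{kp+q}{k}$. *)

theory Defs
  imports Complex_Main
begin

text \<open>Letters of the alphabet X \<union> X^-1: (x, True) stands for x, (x, False) for x^-1.
Elements of the free group FG(X) are represented by freely reduced words.\<close>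

type_synonym 'a letter = "'a \<times> bool"

definition inv_letter :: "'a letter \<Rightarrow> 'a letter" where
  "inv_letter a = (fst a, \<not> snd a)"

fun red :: "'a letter list \<Rightarrow> 'a letter list" where
  "red [] = []"
| "red (a # w) = (case red w of [] \<Rightarrow> [a]
                   | b # r \<Rightarrow> (if b = inv_letter a then r else a # b # r))"

definition mult :: "'a letter list \<Rightarrow> 'a letter \<Rightarrow> 'a letter list" where
  "mult g a = red (g @ [a])"

text \<open>Edges of the Cayley graph Gamma_X: the edge (g, x) joins g and g x.\<close>
definition cayley_edges :: "'a set \<Rightarrow> ('a letter list \<times> 'a) set" where
  "cayley_edges X = {(g, x). g \<in> lists (X \<times> UNIV) \<and> red g = g \<and> x \<in> X}"

definition edge_of :: "'a letter list \<Rightarrow> 'a letter \<Rightarrow> 'a letter list \<times> 'a" where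
  "edge_of g a = (if snd a then (g, fst a) else (mult g a, fst a))"

definition walk_edges :: "'a letter list \<Rightarrow> ('a letter list \<times> 'a) set" where
  "walk_edges w = {edge_of (red (take i w)) (w ! i) | i. i < length w}"

definition verts :: "('a letter list \<times> 'a) set \<Rightarrow> 'a letter list set" where
  "verts E = insert [] (fst ` E \<union> (\<lambda>(g, x). mult g (x, True)) ` E)"

definition connected_from_one :: "('a letter list \<times> 'a) set \<Rightarrow> bool" where
  "connected_from_one E = (\<forall>v \<in> verts E. \<exists>w. walk_edges w \<subseteq> E \<and> red w = v)"

text \<open>Munn's model of FIM(X): pairs (T, g), T a finite connected subgraph of Gamma_X
containing 1 (given by its edge set; vertex set verts T), g a vertex of T.\<close>
definition FIM :: "'a set \<Rightarrow> (('a letter list \<times> 'a) set \<times> 'a letter list) set" where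
  "FIM X = {(T, g). finite T \<and> T \<subseteq> cayley_edges X \<and> connected_from_one T \<and> g \<in> verts T}"

text \<open>The element of FIM(X) represented by a word (Munn tree of the word).\<close>
definition munn :: "'a letter list \<Rightarrow> ('a letter list \<times> 'a) set \<times> 'a letter list" where
  "munn w = (walk_edges w, red w)"

definition fim_length :: "'a set \<Rightarrow> ('a letter list \<times> 'a) set \<times> 'a letter list \<Rightarrow> nat" where
  "fim_length X m = (LEAST n. \<exists>w \<in> lists (X \<times> UNIV). length w = n \<and> munn w = m)"

definition sphere :: "'a set \<Rightarrow> nat \<Rightarrow> (('a letter list \<times> 'a) set \<times> 'a letter list) set" where
  "sphere X K = {m \<in> FIM X. fim_length X m = K}"

definition tree_dist :: "('a letter list \<times> 'a) set \<Rightarrow> 'a letter list \<Rightarrow> nat" where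
  "tree_dist T g = (LEAST n. \<exists>w. length w = n \<and> walk_edges w \<subseteq> T \<and> red w = g)"

definition trunk :: "('a letter list \<times> 'a) set \<Rightarrow> 'a letter list \<Rightarrow> ('a letter list \<times> 'a) set" where
  "trunk T g = walk_edges (SOME w. length w = tree_dist T g \<and> walk_edges w \<subseteq> T \<and> red w = g)"

definition M :: "'a set \<Rightarrow> nat \<Rightarrow> nat \<Rightarrow> (('a letter list \<times> 'a) set \<times> 'a letter list) set" where
  "M X t k = {(T, g) \<in> FIM X. card (trunk T g) = t \<and> card (T - trunk T g) = k}"

definition R :: "nat \<Rightarrow> nat \<Rightarrow> nat \<Rightarrow> real" where
  "R p q k = real q / real (k * p + q) * real ((k * p + q) choose k)"

end

theory Submission
  imports Defs
begin


lemma inv_inv[simp]: "inv_letter (inv_letter a) = a"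
  by (simp add: inv_letter_def)
lemma inv_neq[simp]: "inv_letter a \<noteq> a" "a \<noteq> inv_letter a"
  by (auto simp: inv_letter_def prod_eq_iff)
lemma inv_eq_iff[simp]: "inv_letter a = inv_letter b \<longleftrightarrow> a = b"
  by (metis inv_inv)
lemma inv_eq_swap: "inv_letter a = b \<longleftrightarrow> a = inv_letter b"
  by auto

fun isred :: "'a letter list \<Rightarrow> bool" where
  "isred [] = True"
| "isred [a] = True"
| "isred (a # b # r) = (b \<noteq> inv_letter a \<and> isred (b # r))"

lemma isred_Cons: "isred (a # w) \<longleftrightarrow> isred w \<and> (w \<noteq> [] \<longrightarrow> hd w \<noteq> inv_letter a)"
  by (cases w) auto

lemma isred_red: "isred (red w)"
  by (induction w) (auto split: list.splits simp: isred_Cons)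

lemma red_isred: "isred w \<Longrightarrow> red w = w"
  by (induction w) (auto split: list.splits simp: isred_Cons)

lemma red_id_iff: "red w = w \<longleftrightarrow> isred w"
  by (metis isred_red red_isred)

lemma red_red[simp]: "red (red w) = red w"
  by (simp add: isred_red red_isred)

definition mstep :: "'a letter list \<Rightarrow> 'a letter \<Rightarrow> 'a letter list" where
  "mstep r a = (if r \<noteq> [] \<and> last r = inv_letter a then butlast r else r @ [a])"

lemma isred_append: "isred (u @ v) \<longleftrightarrow> isred u \<and> isred v \<and> (u \<noteq> [] \<longrightarrow> v \<noteq> [] \<longrightarrow> hd v \<noteq> inv_letter (last u))"
  by (induction u) (auto simp: isred_Cons)

lemma isred_snoc: "isred (u @ [a]) \<longleftrightarrow> isred u \<and> (u \<noteq> [] \<longrightarrow> last u \<noteq> inv_letter a)"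
  by (auto simp: isred_append inv_eq_swap)

lemma isred_butlast: "isred u \<Longrightarrow> isred (butlast u)"
  by (metis append_butlast_last_id butlast.simps(1) isred_append)

lemma isred_take: "isred u \<Longrightarrow> isred (take i u)"
  by (metis append_take_drop_id isred_append)

lemma isred_mstep: "isred r \<Longrightarrow> isred (mstep r a)"
  by (auto simp: mstep_def isred_snoc isred_butlast)

lemma red_snoc: "red (w @ [a]) = mstep (red w) a"
proof (induction w)
  case Nil
  then show ?case by (simp add: mstep_def)
next
  case (Cons b w)
  have r: "isred (red w)" by (rule isred_red)
  show ?case
    using r
    apply (simp add: Cons.IH)
    apply (cases "red w" rule: rev_cases)
     apply (auto simp: mstep_def split: list.splits)
    done
qed

lemma red_append_red: "red (red u @ v) = red (u @ v)"
proof (induction v rule: rev_induct)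
  case Nil
  then show ?case by simp
next
  case (snoc a v)
  then show ?case by (metis append_assoc red_snoc)
qed

lemma red_append_red2: "red (u @ red v) = red (u @ v)"
  by (induction u) auto

lemma red_len: "red w = w \<or> length (red w) + 2 \<le> length w"
proof (induction w)
  case Nil
  then show ?case by simp
next
  case (Cons a w)
  then show ?case
    by (cases "red w") (auto split: if_splits)
qed

lemma red_len_le: "length (red w) \<le> length w"
  using red_len[of w] by auto

lemma mstep_red: "isred r \<Longrightarrow> red (r @ [a]) = mstep r a"
  by (simp add: red_snoc red_isred)

lemma mult_eq: "isred r \<Longrightarrow> mult r a = mstep r a"
  by (simp add: mult_def mstep_red)

lemma mstep_inv: "isred r \<Longrightarrow> mstep (mstep r a) (inv_letter a) = r"
  apply (cases r rule: rev_cases)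
   apply (auto simp: mstep_def isred_snoc butlast_append)
  done



definition pe :: "'a letter list \<Rightarrow> 'a letter list \<times> 'a" where
  "pe c = edge_of (butlast c) (last c)"

definition ends :: "'a letter list \<times> 'a \<Rightarrow> 'a letter list set" where
  "ends e = {fst e, mult (fst e) (snd e, True)}"

definition Pre :: "'b list \<Rightarrow> 'b list set" where
  "Pre g = (\<lambda>i. take i g) ` {..length g}"

lemma Pre_Nil[simp]: "Pre [] = {[]}"
  by (auto simp: Pre_def)

lemma Pre_snoc: "Pre (g @ [a]) = insert (g @ [a]) (Pre g)"
proof -
  have "{..length (g @ [a])} = insert (Suc (length g)) {..length g}" by auto
  then show ?thesis
    by (auto simp: Pre_def image_iff)
qed

lemma Pre_len: "c \<in> Pre g \<Longrightarrow> length c \<le> length g"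
  by (auto simp: Pre_def)

lemma Nil_Pre[simp]: "[] \<in> Pre g"
  by (force simp: Pre_def)

lemma self_Pre[simp]: "g \<in> Pre g"
proof -
  have "g = take (length g) g" by simp
  then show ?thesis unfolding Pre_def by blast
qed

lemma Pre_prefix: "c \<in> Pre g \<longleftrightarrow> (\<exists>d. g = c @ d)"
proof
  assume "c \<in> Pre g"
  then obtain i where "c = take i g" unfolding Pre_def by blast
  then show "\<exists>d. g = c @ d" by (metis append_take_drop_id)
next
  assume "\<exists>d. g = c @ d"
  then obtain d where d: "g = c @ d" by blast
  then have "c = take (length c) g" "length c \<le> length g" by auto
  then show "c \<in> Pre g" unfolding Pre_def by blast
qed

lemma Pre_isred: "isred g \<Longrightarrow> c \<in> Pre g \<Longrightarrow> isred c"
  by (auto simp: Pre_def isred_take)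

lemma Pre_trans: "c \<in> Pre d \<Longrightarrow> d \<in> Pre g \<Longrightarrow> c \<in> Pre g"
  by (auto simp: Pre_prefix)

lemma finite_Pre[simp]: "finite (Pre g)"
  by (simp add: Pre_def)

lemma card_Pre: "card (Pre g) = Suc (length g)"
proof -
  have "inj_on (\<lambda>i. take i g) {..length g}"
    by (rule inj_onI) (metis atMost_iff length_take min.absorb2)
  then show ?thesis by (simp add: Pre_def card_image)
qed

lemma walk_edges_Nil[simp]: "walk_edges [] = {}"
  by (simp add: walk_edges_def)

lemma walk_edges_img: "walk_edges w = (\<lambda>i. edge_of (red (take i w)) (w ! i)) ` {..<length w}"
  unfolding walk_edges_def by blast

lemma walk_edges_snoc: "walk_edges (w @ [a]) = insert (edge_of (red w) a) (walk_edges w)"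
proof -
  have 1: "{..<length (w @ [a])} = insert (length w) {..<length w}" by auto
  have 2: "(\<lambda>i. edge_of (red (take i (w @ [a]))) ((w @ [a]) ! i)) ` {..<length w}
        = (\<lambda>i. edge_of (red (take i w)) (w ! i)) ` {..<length w}"
    by (rule image_cong) (auto simp: nth_append)
  show ?thesis unfolding walk_edges_img 1 image_insert 2 by simp
qed

lemma walk_edges_append:
  "walk_edges (x @ y) = walk_edges x \<union> (\<lambda>i. edge_of (red (x @ take i y)) (y ! i)) ` {..<length y}"
proof (induction y rule: rev_induct)
  case Nil
  then show ?case by simp
next
  case (snoc a y)
  have 1: "{..<length (y @ [a])} = insert (length y) {..<length y}" by auto
  have 2: "(\<lambda>i. edge_of (red (x @ take i (y @ [a]))) ((y @ [a]) ! i)) ` {..<length y}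
        = (\<lambda>i. edge_of (red (x @ take i y)) (y ! i)) ` {..<length y}"
    by (rule image_cong) (auto simp: nth_append)
  have "walk_edges (x @ y @ [a]) = insert (edge_of (red (x @ y)) a) (walk_edges (x @ y))"
    using walk_edges_snoc[of "x @ y" a] by simp
  then show ?case unfolding 1 image_insert 2 using snoc by simp
qed

lemma pe_snoc: "isred (u @ [a]) \<Longrightarrow> pe (u @ [a]) = (if snd a then (u, fst a) else (u @ [a], fst a))"
  by (auto simp: pe_def edge_of_def mult_eq isred_snoc mstep_def)

lemma pe_snoc': "pe (u @ [a]) = edge_of u a"
  by (simp add: pe_def)

lemma pe_inj: "isred c \<Longrightarrow> isred c' \<Longrightarrow> c \<noteq> [] \<Longrightarrow> c' \<noteq> [] \<Longrightarrow> pe c = pe c' \<Longrightarrow> c = c'"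
proof -
  assume h: "isred c" "isred c'" "c \<noteq> []" "c' \<noteq> []" "pe c = pe c'"
  obtain u a where c: "c = u @ [a]" using h(3) by (metis rev_exhaust)
  obtain u' a' where c': "c' = u' @ [a']" using h(4) by (metis rev_exhaust)
  have pa: "pe c = (if snd a then (u, fst a) else (c, fst a))" using pe_snoc h(1) c by metis
  have pa': "pe c' = (if snd a' then (u', fst a') else (c', fst a'))" using pe_snoc h(2) c' by metis
  show ?thesis
  proof (cases "snd a"; cases "snd a'")
    assume "snd a" "snd a'"
    then show ?thesis using h(5) pa pa' c c' by (auto simp: prod_eq_iff)
  next
    assume "\<not> snd a" "\<not> snd a'"
    then show ?thesis using h(5) pa pa' by auto
  next
    assume s: "snd a" "\<not> snd a'"
    then have "u = u' @ [a']" "fst a = fst a'" using h(5) pa pa' c' by auto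
    moreover have "a = inv_letter a'" using s \<open>fst a = fst a'\<close> by (auto simp: inv_letter_def prod_eq_iff)
    ultimately show ?thesis using h(1) c by (simp add: isred_append)
  next
    assume s: "\<not> snd a" "snd a'"
    then have "u' = u @ [a]" "fst a = fst a'" using h(5) pa pa' c by auto
    moreover have "a' = inv_letter a" using s \<open>fst a = fst a'\<close> by (auto simp: inv_letter_def prod_eq_iff)
    ultimately show ?thesis using h(2) c' by (simp add: isred_append)
  qed
qed

lemma ends_edge_of: "isred r \<Longrightarrow> ends (edge_of r a) = {r, mstep r a}"
proof (cases "snd a")
  case True
  assume r: "isred r"
  then show ?thesis using True by (simp add: ends_def edge_of_def mult_eq) (metis prod.collapse)
next
  case False
  assume r: "isred r"
  have "(fst a, True) = inv_letter a" using False by (simp add: inv_letter_def prod_eq_iff)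
  then show ?thesis using False r
    by (auto simp: ends_def edge_of_def mult_eq mstep_inv isred_mstep)
qed

lemma ends_pe: "isred c \<Longrightarrow> c \<noteq> [] \<Longrightarrow> ends (pe c) = {butlast c, c}"
proof -
  assume h: "isred c" "c \<noteq> []"
  then obtain u a where c: "c = u @ [a]" by (metis rev_exhaust)
  have iu: "isred u" using h(1) c isred_append by blast
  have "mstep u a = c" using mstep_red[OF iu, of a] red_isred[OF h(1)] c by simp
  have "ends (pe c) = ends (edge_of u a)" using c by (simp add: pe_snoc')
  also have "\<dots> = {u, mstep u a}" by (rule ends_edge_of[OF iu])
  finally show ?thesis using c \<open>mstep u a = c\<close> by simp
qed

lemma cross:
  assumes r: "isred r" and c: "isred c" "c \<noteq> []"
  shows "edge_of r a = pe c \<longleftrightarrow> ((c \<in> Pre (mstep r a)) \<noteq> (c \<in> Pre r))"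
proof (cases "r \<noteq> [] \<and> last r = inv_letter a")
  case True
  then obtain r' where r': "r = r' @ [inv_letter a]" by (metis append_butlast_last_id)
  have ms: "mstep r a = r'" using True r' by (simp add: mstep_def)
  have "edge_of r a = pe r"
    using r r' by (auto simp: pe_snoc edge_of_def mult_eq mstep_def inv_letter_def)
  then have "edge_of r a = pe c \<longleftrightarrow> c = r"
    using pe_inj[OF c(1) r] c r' by auto
  moreover have "(c \<in> Pre r') \<noteq> (c \<in> Pre r) \<longleftrightarrow> c = r"
    using r' Pre_snoc[of r' "inv_letter a"] Pre_len[of "r' @ [inv_letter a]" r'] by auto
  ultimately show ?thesis using ms r' by simp
next
  case False
  have ms: "mstep r a = r @ [a]" using False by (auto simp: mstep_def)
  have ir: "isred (r @ [a])" using False r by (auto simp: isred_snoc)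
  have "edge_of r a = pe c \<longleftrightarrow> c = r @ [a]"
    using pe_inj[OF c(1) ir] c pe_snoc'[of r a] by auto
  moreover have "(c \<in> Pre (r @ [a])) \<noteq> (c \<in> Pre r) \<longleftrightarrow> c = r @ [a]"
    using Pre_snoc[of r a] Pre_len[of "r @ [a]" r] by auto
  ultimately show ?thesis using ms by simp
qed

lemma walked: "c \<in> Pre (red w) \<Longrightarrow> c \<noteq> [] \<Longrightarrow> pe c \<in> walk_edges w"
proof (induction w arbitrary: c rule: rev_induct)
  case Nil
  then show ?case by simp
next
  case (snoc a w)
  have r: "isred (red w)" by (rule isred_red)
  have ic: "isred c" using snoc.prems isred_red Pre_isred by blast
  show ?case
  proof (cases "c \<in> Pre (red w)")
    case True
    then show ?thesis using snoc by (simp add: walk_edges_snoc)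
  next
    case False
    have "c \<in> Pre (mstep (red w) a)" using snoc.prems(1) by (simp only: red_snoc)
    have cr: "edge_of (red w) a = pe c \<longleftrightarrow> ((c \<in> Pre (mstep (red w) a)) \<noteq> (c \<in> Pre (red w)))"
      by (rule cross[OF r ic snoc.prems(2)])
    have "edge_of (red w) a = pe c" using cr False \<open>c \<in> Pre (mstep (red w) a)\<close> by simp
    then show ?thesis by (simp add: walk_edges_snoc)
  qed
qed

lemma walk_edges_red: "isred g \<Longrightarrow> walk_edges g = pe ` (Pre g - {[]})"
proof (induction g rule: rev_induct)
  case Nil
  then show ?case by simp
next
  case (snoc a g)
  have ig: "isred g" using snoc.prems by (simp add: isred_append)
  have "walk_edges (g @ [a]) = insert (edge_of g a) (walk_edges g)"
    using walk_edges_snoc red_isred[OF ig] by metis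
  then show ?case using snoc.IH[OF ig] by (simp add: Pre_snoc pe_snoc' insert_Diff_if)
qed



definition PC :: "'a set \<Rightarrow> 'a letter list set \<Rightarrow> bool" where
  "PC X V = (finite V \<and> [] \<in> V \<and> (\<forall>v\<in>V. isred v \<and> v \<in> lists (X \<times> UNIV) \<and> butlast v \<in> V))"

definition Tr :: "'a letter list set \<Rightarrow> ('a letter list \<times> 'a) set" where
  "Tr V = pe ` (V - {[]})"

lemma PC_Pre: "PC X V \<Longrightarrow> v \<in> V \<Longrightarrow> Pre v \<subseteq> V"
proof (induction v rule: rev_induct)
  case Nil
  then show ?case by (simp add: PC_def)
next
  case (snoc a v)
  have "v \<in> V" using snoc.prems unfolding PC_def by (metis butlast_snoc)
  then show ?case using snoc by (simp add: Pre_snoc)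
qed

lemma butlast_Pre: "butlast v \<in> Pre v"
proof (cases "v = []")
  case True then show ?thesis by simp
next
  case False
  then have "v = butlast v @ [last v]" by simp
  then show ?thesis unfolding Pre_prefix by blast
qed

lemma verts_ends: "verts E = insert [] (\<Union> (ends ` E))"
  unfolding verts_def ends_def by (auto simp: case_prod_beta)

lemma verts_Tr: "PC X V \<Longrightarrow> verts (Tr V) = V"
proof -
  assume pc: "PC X V"
  have "\<Union> (ends ` Tr V) = \<Union> ((\<lambda>c. {butlast c, c}) ` (V - {[]}))"
    unfolding Tr_def image_image
    by (rule arg_cong[where f = Union], rule image_cong) (use pc in \<open>auto simp: PC_def ends_pe\<close>)
  also have "\<dots> \<subseteq> V" using pc by (auto simp: PC_def)
  finally have 1: "\<Union> (ends ` Tr V) \<subseteq> V" .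
  have 2: "V - {[]} \<subseteq> \<Union> ((\<lambda>c. {butlast c, c}) ` (V - {[]}))" by auto
  have 3: "\<Union> (ends ` Tr V) = \<Union> ((\<lambda>c. {butlast c, c}) ` (V - {[]}))"
    unfolding Tr_def image_image
    by (rule arg_cong[where f = Union], rule image_cong) (use pc in \<open>auto simp: PC_def ends_pe\<close>)
  show ?thesis using 1 2 3 pc unfolding verts_ends by (auto simp: PC_def)
qed

lemma pe_cayley: "isred c \<Longrightarrow> c \<noteq> [] \<Longrightarrow> c \<in> lists (X \<times> UNIV) \<Longrightarrow> pe c \<in> cayley_edges X"
proof -
  assume h: "isred c" "c \<noteq> []" "c \<in> lists (X \<times> UNIV)"
  then obtain u a where c: "c = u @ [a]" by (metis rev_exhaust)
  have iu: "isred u" using h c isred_append by blast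
  have "pe c = (if snd a then (u, fst a) else (c, fst a))" using pe_snoc h(1) c by metis
  then show ?thesis using h c iu by (auto simp: cayley_edges_def red_isred)
qed

lemma Tr_FIM: "PC X V \<Longrightarrow> g \<in> V \<Longrightarrow> (Tr V, g) \<in> FIM X"
proof -
  assume pc: "PC X V" and g: "g \<in> V"
  have fin: "finite (Tr V)" using pc by (simp add: PC_def Tr_def)
  have sub: "Tr V \<subseteq> cayley_edges X" using pc by (auto simp: PC_def Tr_def intro!: pe_cayley)
  have conn: "connected_from_one (Tr V)"
    unfolding connected_from_one_def verts_Tr[OF pc]
  proof
    fix v assume v: "v \<in> V"
    have iv: "isred v" using pc v by (simp add: PC_def)
    have "walk_edges v \<subseteq> Tr V" using walk_edges_red[OF iv] PC_Pre[OF pc v] by (auto simp: Tr_def)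
    then show "\<exists>w. walk_edges w \<subseteq> Tr V \<and> red w = v" using red_isred[OF iv] by blast
  qed
  show ?thesis using fin sub conn g verts_Tr[OF pc] by (simp add: FIM_def)
qed

lemma mstep_lists: "h \<in> lists A \<Longrightarrow> a \<in> A \<Longrightarrow> mstep h a \<in> lists A"
  unfolding mstep_def in_lists_conv_set by (auto dest: in_set_butlastD)

lemma ends_cayley: "e \<in> cayley_edges X \<Longrightarrow> v \<in> ends e \<Longrightarrow> isred v \<and> v \<in> lists (X \<times> UNIV)"
proof -
  assume e: "e \<in> cayley_edges X" and v: "v \<in> ends e"
  obtain h x where ex: "e = (h, x)" by fastforce
  have h: "isred h" "h \<in> lists (X \<times> UNIV)" "x \<in> X" using e ex by (auto simp: cayley_edges_def red_id_iff)
  have "mult h (x, True) = mstep h (x, True)" using h by (simp add: mult_eq)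
  moreover have "mstep h (x, True) \<in> lists (X \<times> UNIV)" using mstep_lists[OF h(2), of "(x, True)"] h(3) by simp
  ultimately show ?thesis using v ex h isred_mstep by (auto simp: ends_def)
qed

lemma FIM_Tr:
  assumes m: "(T, g) \<in> FIM X"
  shows "PC X (verts T) \<and> T = Tr (verts T) \<and> g \<in> verts T"
proof -
  have fin: "finite T" and sub: "T \<subseteq> cayley_edges X" and conn: "connected_from_one T"
    and g: "g \<in> verts T" using m by (auto simp: FIM_def)
  let ?V = "verts T"
  have vr: "isred v \<and> v \<in> lists (X \<times> UNIV)" if "v \<in> ?V" for v
  proof -
    have "v = [] \<or> (\<exists>e\<in>T. v \<in> ends e)" using that unfolding verts_ends by auto
    then show ?thesis
    proof
      assume "v = []" then show ?thesis by simp
    next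
      assume "\<exists>e\<in>T. v \<in> ends e"
      then obtain e where "e \<in> T" "v \<in> ends e" by blast
      then show ?thesis using ends_cayley[of e X v] sub by blast
    qed
  qed
  have walkT: "pe c \<in> T" if cv: "c \<in> ?V" "c \<noteq> []" for c
  proof -
    obtain w where w: "walk_edges w \<subseteq> T" "red w = c" using conn cv(1) by (auto simp: connected_from_one_def)
    have "c \<in> Pre (red w)" using w by simp
    then show ?thesis using walked cv(2) w by blast
  qed
  have bl: "butlast v \<in> ?V" if vv: "v \<in> ?V" for v
  proof (cases "butlast v = []")
    case True then show ?thesis by (simp add: verts_def)
  next
    case False
    obtain w where w: "walk_edges w \<subseteq> T" "red w = v" using conn vv by (auto simp: connected_from_one_def)
    have "butlast v \<in> Pre (red w)" using w butlast_Pre by simp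
    then have "pe (butlast v) \<in> T" using walked False w by blast
    moreover have "butlast v \<in> ends (pe (butlast v))"
      using ends_pe[OF _ False] vr[OF vv] isred_butlast by blast
    ultimately show ?thesis unfolding verts_ends by blast
  qed
  have finV: "finite ?V" using fin by (simp add: verts_def)
  have pc: "PC X ?V" using finV vr bl by (simp add: PC_def verts_def)
  have "T \<subseteq> Tr ?V"
  proof
    fix e assume eT: "e \<in> T"
    obtain h x where ex: "e = (h, x)" by fastforce
    have h: "isred h" "x \<in> X" using sub eT ex by (auto simp: cayley_edges_def red_id_iff)
    show "e \<in> Tr ?V"
    proof (cases "h \<noteq> [] \<and> last h = (x, False)")
      case True
      then obtain h' where h': "h = h' @ [(x, False)]" by (metis append_butlast_last_id)
      have "pe h = (h, x)" using pe_snoc[of h' "(x, False)"] h h' by simp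
      moreover have "h \<in> ?V" using eT ex by (force simp: verts_def)
      ultimately show ?thesis using ex True unfolding Tr_def by (metis DiffI empty_iff image_eqI insertE)
    next
      case False
      have "(x, False) = inv_letter (x, True)" by (simp add: inv_letter_def)
      then have ms: "mult h (x, True) = h @ [(x, True)]" using False h by (auto simp: mult_eq mstep_def)
      have ir: "isred (h @ [(x, True)])" using False h \<open>(x, False) = inv_letter (x, True)\<close>
        by (auto simp: isred_snoc)
      have "pe (h @ [(x, True)]) = (h, x)" using pe_snoc[OF ir] by simp
      have "h @ [(x, True)] \<in> ends e" using ex ms by (simp add: ends_def)
      then have "h @ [(x, True)] \<in> ?V - {[]}" unfolding verts_ends using eT by blast
      moreover have "e = pe (h @ [(x, True)])" using ex \<open>pe (h @ [(x, True)]) = (h, x)\<close> by simp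
      ultimately show ?thesis unfolding Tr_def by blast
    qed
  qed
  moreover have "Tr ?V \<subseteq> T" unfolding Tr_def using walkT by blast
  ultimately show ?thesis using pc g by blast
qed

lemma FIM_eq: "FIM X = (\<lambda>(V, g). (Tr V, g)) ` {(V, g). PC X V \<and> g \<in> V}"
proof
  show "FIM X \<subseteq> (\<lambda>(V, g). (Tr V, g)) ` {(V, g). PC X V \<and> g \<in> V}"
  proof
    fix m assume m: "m \<in> FIM X"
    obtain T g where mt: "m = (T, g)" by fastforce
    have "PC X (verts T) \<and> T = Tr (verts T) \<and> g \<in> verts T" using FIM_Tr m mt by blast
    then show "m \<in> (\<lambda>(V, g). (Tr V, g)) ` {(V, g). PC X V \<and> g \<in> V}"
      using mt by (auto intro!: image_eqI[where x = "(verts T, g)"])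
  qed
next
  show "(\<lambda>(V, g). (Tr V, g)) ` {(V, g). PC X V \<and> g \<in> V} \<subseteq> FIM X"
    using Tr_FIM by auto
qed

lemma FIM_inj: "inj_on (\<lambda>(V, g). (Tr V, g)) {(V, g). PC X V \<and> g \<in> V}"
proof (rule inj_onI)
  fix x y assume x: "x \<in> {(V, g). PC X V \<and> g \<in> V}" and y: "y \<in> {(V, g). PC X V \<and> g \<in> V}"
    and e: "(\<lambda>(V, g). (Tr V, g)) x = (\<lambda>(V, g). (Tr V, g)) y"
  obtain V g where xv: "x = (V, g)" by fastforce
  obtain V' g' where yv: "y = (V', g')" by fastforce
  have "Tr V = Tr V'" "g = g'" using e xv yv by auto
  moreover have pcs: "PC X V" "PC X V'" using x y xv yv by auto
  have v1: "verts (Tr V) = V" by (rule verts_Tr[OF pcs(1)])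
  have v2: "verts (Tr V') = V'" by (rule verts_Tr[OF pcs(2)])
  have "V = V'" using v1 v2 \<open>Tr V = Tr V'\<close> by metis
  then show "x = y" using xv yv \<open>g = g'\<close> by simp
qed

lemma pe_inj_on: "\<forall>v\<in>V. isred v \<Longrightarrow> inj_on pe (V - {[]})"
  by (rule inj_onI) (auto intro: pe_inj)

lemma trunk_Tr:
  assumes pc: "PC X V" and g: "g \<in> V"
  shows "trunk (Tr V) g = pe ` (Pre g - {[]})"
proof -
  have ig: "isred g" using pc g by (simp add: PC_def)
  have gw: "walk_edges g \<subseteq> Tr V" using walk_edges_red[OF ig] PC_Pre[OF pc g] by (auto simp: Tr_def)
  have td: "tree_dist (Tr V) g = length g"
    unfolding tree_dist_def
  proof (rule Least_equality)
    show "\<exists>w. length w = length g \<and> walk_edges w \<subseteq> Tr V \<and> red w = g"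
      using gw red_isred[OF ig] by blast
  next
    fix n assume "\<exists>w. length w = n \<and> walk_edges w \<subseteq> Tr V \<and> red w = g"
    then show "length g \<le> n" using red_len_le by blast
  qed
  let ?P = "\<lambda>w. length w = tree_dist (Tr V) g \<and> walk_edges w \<subseteq> Tr V \<and> red w = g"
  have "?P g" using td gw red_isred[OF ig] by simp
  then have "?P (SOME w. ?P w)" by (rule someI)
  then have P: "length (SOME w. ?P w) = length g" "red (SOME w. ?P w) = g" using td by auto
  have "red (SOME w. ?P w) = (SOME w. ?P w) \<or> length (red (SOME w. ?P w)) + 2 \<le> length (SOME w. ?P w)"
    by (rule red_len)
  then have "(SOME w. ?P w) = g" using P by auto
  then show ?thesis unfolding trunk_def using walk_edges_red[OF ig] by simp
qed

lemma card_Tr: "PC X V \<Longrightarrow> card (Tr V) = card V - 1"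
  unfolding Tr_def by (subst card_image) (auto simp: PC_def intro!: pe_inj_on)

lemma card_trunk:
  assumes pc: "PC X V" and g: "g \<in> V"
  shows "card (trunk (Tr V) g) = length g"
    and "card (Tr V - trunk (Tr V) g) = card V - 1 - length g"
proof -
  have ig: "isred g" using pc g by (simp add: PC_def)
  have inj: "inj_on pe (V - {[]})" using pc by (auto simp: PC_def intro!: pe_inj_on)
  have PV: "Pre g \<subseteq> V" using PC_Pre[OF pc g] .
  have "inj_on pe (Pre g - {[]})" by (rule inj_on_subset[OF inj]) (use PV in auto)
  then show "card (trunk (Tr V) g) = length g"
    using trunk_Tr[OF pc g] card_Pre[of g] by (simp add: card_image card_Diff_singleton)
  have "Tr V - trunk (Tr V) g = pe ` (V - {[]}) - pe ` (Pre g - {[]})"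
    unfolding trunk_Tr[OF pc g] by (simp only: Tr_def)
  also have "\<dots> = pe ` ((V - {[]}) - (Pre g - {[]}))"
    by (rule inj_on_image_set_diff[symmetric, OF inj]) (use PV in auto)
  also have "card \<dots> = card ((V - {[]}) - (Pre g - {[]}))"
    by (rule card_image[OF inj_on_subset[OF inj]]) auto
  also have "\<dots> = card (V - {[]}) - card (Pre g - {[]})"
    using PV pc by (subst card_Diff_subset) (auto simp: PC_def)
  also have "\<dots> = card V - 1 - length g" using PV pc card_Pre[of g] by (auto simp: PC_def)
  finally show "card (Tr V - trunk (Tr V) g) = card V - 1 - length g" .
qed



definition cnt :: "'a letter list \<Rightarrow> 'a letter list \<times> 'a \<Rightarrow> nat" where
  "cnt w e = card {i. i < length w \<and> edge_of (red (take i w)) (w ! i) = e}"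

lemma cnt_snoc: "cnt (w @ [a]) e = cnt w e + (if edge_of (red w) a = e then 1 else 0)"
proof -
  have "{i. i < length (w @ [a]) \<and> edge_of (red (take i (w @ [a]))) ((w @ [a]) ! i) = e}
      = {i. i < length w \<and> edge_of (red (take i w)) (w ! i) = e} \<union> (if edge_of (red w) a = e then {length w} else {})"
    by (auto simp: nth_append less_Suc_eq)
  then show ?thesis unfolding cnt_def by (simp add: card_insert_if)
qed

lemma cnt_parity: "isred c \<Longrightarrow> c \<noteq> [] \<Longrightarrow> odd (cnt w (pe c)) \<longleftrightarrow> c \<in> Pre (red w)"
proof (induction w rule: rev_induct)
  case Nil
  then show ?case by (simp add: cnt_def Pre_def)
next
  case (snoc a w)
  have cr: "edge_of (red w) a = pe c \<longleftrightarrow> ((c \<in> Pre (mstep (red w) a)) \<noteq> (c \<in> Pre (red w)))"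
    by (rule cross[OF isred_red snoc.prems])
  show ?case unfolding cnt_snoc red_snoc using snoc.IH[OF snoc.prems] cr by auto
qed

lemma cnt_pos: "e \<in> walk_edges w \<Longrightarrow> cnt w e \<ge> 1"
proof -
  assume "e \<in> walk_edges w"
  then obtain i where "i < length w" "edge_of (red (take i w)) (w ! i) = e" by (auto simp: walk_edges_def)
  then have "i \<in> {i. i < length w \<and> edge_of (red (take i w)) (w ! i) = e}" by simp
  moreover have "finite {i. i < length w \<and> edge_of (red (take i w)) (w ! i) = e}" by simp
  ultimately have "card {i. i < length w \<and> edge_of (red (take i w)) (w ! i) = e} > 0"
    by (subst card_gt_0_iff) blast
  then show ?thesis unfolding cnt_def by simp
qed

lemma lower_bound:
  assumes pc: "PC X V" and g: "g \<in> V" and we: "walk_edges w = Tr V" and rw: "red w = g"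
  shows "length g + 2 * (card V - 1 - length g) \<le> length w"
proof -
  let ?F = "\<lambda>c. {i. i < length w \<and> edge_of (red (take i w)) (w ! i) = pe c}"
  have inj: "inj_on pe (V - {[]})" using pc by (auto simp: PC_def intro!: pe_inj_on)
  have PV: "Pre g \<subseteq> V" using PC_Pre[OF pc g] .
  have finV: "finite V" using pc by (simp add: PC_def)
  have disj: "\<forall>c\<in>V - {[]}. \<forall>d\<in>V - {[]}. c \<noteq> d \<longrightarrow> ?F c \<inter> ?F d = {}"
  proof (intro ballI impI)
    fix c d assume c: "c \<in> V - {[]}" and d: "d \<in> V - {[]}" and cd: "c \<noteq> d"
    have "pe c \<noteq> pe d" using inj c d cd by (meson inj_onD)
    then show "?F c \<inter> ?F d = {}" by auto
  qed
  have "card (\<Union>c\<in>V - {[]}. ?F c) = (\<Sum>c\<in>V - {[]}. card (?F c))"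
    by (rule card_UN_disjoint) (use finV disj in auto)
  moreover have "card (\<Union>c\<in>V - {[]}. ?F c) \<le> card {..<length w}"
    by (rule card_mono) auto
  ultimately have le: "(\<Sum>c\<in>V - {[]}. cnt w (pe c)) \<le> length w" by (simp add: cnt_def)
  have ge: "cnt w (pe c) \<ge> (if c \<in> Pre g then 1 else 2)" if c: "c \<in> V - {[]}" for c
  proof -
    have ic: "isred c" using pc c by (simp add: PC_def)
    have "pe c \<in> walk_edges w" using c we unfolding Tr_def by blast
    then have "cnt w (pe c) \<ge> 1" by (rule cnt_pos)
    moreover have "odd (cnt w (pe c)) \<longleftrightarrow> c \<in> Pre g" using cnt_parity[OF ic, of w] c rw by auto
    ultimately show ?thesis
    proof (cases "c \<in> Pre g")
      case True then show ?thesis using \<open>cnt w (pe c) \<ge> 1\<close> by simp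
    next
      case False
      then have "even (cnt w (pe c))" "cnt w (pe c) \<ge> 1" using \<open>odd (cnt w (pe c)) \<longleftrightarrow> c \<in> Pre g\<close> \<open>cnt w (pe c) \<ge> 1\<close> by auto
      then have "cnt w (pe c) \<ge> 2" by presburger
      then show ?thesis using False by simp
    qed
  qed
  have split: "V - {[]} = (Pre g - {[]}) \<union> (V - Pre g)" using PV by auto
  have "(\<Sum>c\<in>V - {[]}. (if c \<in> Pre g then 1 else 2::nat))
      = (\<Sum>c\<in>Pre g - {[]}. (if c \<in> Pre g then 1 else 2)) + (\<Sum>c\<in>V - Pre g. (if c \<in> Pre g then 1 else 2))"
    unfolding split by (rule sum.union_disjoint) (use finV in auto)
  also have "\<dots> = card (Pre g - {[]}) + 2 * card (V - Pre g)" by simp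
  also have "\<dots> = length g + 2 * (card V - 1 - length g)"
    using PV finV card_Pre[of g] by (simp add: card_Diff_subset card_Diff_singleton)
  finally have "length g + 2 * (card V - 1 - length g) = (\<Sum>c\<in>V - {[]}. (if c \<in> Pre g then 1 else 2::nat))" by simp
  also have "\<dots> \<le> (\<Sum>c\<in>V - {[]}. cnt w (pe c))" by (rule sum_mono) (use ge in blast)
  finally show ?thesis using le by simp
qed

lemma visit: "v \<in> verts (walk_edges w) \<Longrightarrow> \<exists>i\<le>length w. red (take i w) = v"
proof -
  assume "v \<in> verts (walk_edges w)"
  then have "v = [] \<or> (\<exists>e\<in>walk_edges w. v \<in> ends e)" unfolding verts_ends by auto
  then show ?thesis
  proof
    assume "v = []" then show ?thesis by (intro exI[of _ 0]) simp
  next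
    assume "\<exists>e\<in>walk_edges w. v \<in> ends e"
    then obtain i where i: "i < length w" "v \<in> ends (edge_of (red (take i w)) (w ! i))"
      by (auto simp: walk_edges_def)
    have "ends (edge_of (red (take i w)) (w ! i)) = {red (take i w), mstep (red (take i w)) (w ! i)}"
      by (rule ends_edge_of[OF isred_red])
    moreover have "mstep (red (take i w)) (w ! i) = red (take (Suc i) w)"
      using i(1) by (simp add: take_Suc_conv_app_nth red_snoc)
    ultimately have "v = red (take i w) \<or> v = red (take (Suc i) w)" using i by auto
    then show ?thesis using i(1) by (metis Suc_leI less_imp_le)
  qed
qed



lemma red_cancel_mid:
  assumes "red x = u" "red (x @ [a, inv_letter a]) = u"
  shows "red ((x @ [a, inv_letter a]) @ z) = red (x @ z)"
proof -
  have "red ((x @ [a, inv_letter a]) @ z) = red (red (x @ [a, inv_letter a]) @ z)" by (simp add: red_append_red)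
  also have "\<dots> = red (red x @ z)" using assms by simp
  also have "\<dots> = red (x @ z)" by (simp add: red_append_red)
  finally show ?thesis .
qed

lemma upper:
  "PC X V \<Longrightarrow> g \<in> V \<Longrightarrow> \<exists>w \<in> lists (X \<times> UNIV). walk_edges w = Tr V \<and> red w = g
      \<and> length w = length g + 2 * (card V - 1 - length g)"
proof (induction "card V" arbitrary: V rule: less_induct)
  case less
  have pc: "PC X V" and g: "g \<in> V" using less.prems by auto
  have ig: "isred g" using pc g by (simp add: PC_def)
  have PV: "Pre g \<subseteq> V" using PC_Pre[OF pc g] .
  have finV: "finite V" using pc by (simp add: PC_def)
  show ?case
  proof (cases "V \<subseteq> Pre g")
    case True
    then have VP: "V = Pre g" using PV by auto
    have "g \<in> lists (X \<times> UNIV)" using pc g by (simp add: PC_def)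
    moreover have "walk_edges g = Tr V" using walk_edges_red[OF ig] VP by (simp add: Tr_def)
    moreover have "card V = Suc (length g)" using VP card_Pre by simp
    ultimately show ?thesis using red_isred[OF ig] by (intro bexI[of _ g]) auto
  next
    case False
    let ?S = "V - Pre g"
    have Sne: "?S \<noteq> {}" and Sfin: "finite ?S" using False finV by auto
    let ?m = "Max (length ` ?S)"
    have "?m \<in> length ` ?S" using Sne Sfin by (intro Max_in) auto
    then obtain v where vS: "v \<in> ?S" and vm: "length v = ?m" by auto
    have vmax: "length u \<le> length v" if "u \<in> ?S" for u
      using that Sfin vm by (metis Max_ge finite_imageI image_eqI)
    have vV: "v \<in> V" and vnP: "v \<notin> Pre g" using vS by auto
    have vne: "v \<noteq> []" using vnP by auto
    have iv: "isred v" and vl: "v \<in> lists (X \<times> UNIV)" using pc vV by (auto simp: PC_def)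
    define V' where "V' = V - {v}"
    have pc': "PC X V'"
      unfolding PC_def
    proof (intro conjI ballI)
      show "finite V'" using finV by (simp add: V'_def)
      show "[] \<in> V'" using pc vne by (simp add: V'_def PC_def)
      fix u assume u: "u \<in> V'"
      then show "isred u" "u \<in> lists (X \<times> UNIV)" using pc by (auto simp: V'_def PC_def)
      have buV: "butlast u \<in> V" using pc u by (simp add: V'_def PC_def)
      have "butlast u \<noteq> v"
      proof
        assume bu: "butlast u = v"
        then have une: "u \<noteq> []" using vne by auto
        have lu: "length u = Suc (length v)" using bu une by (metis One_nat_def Suc_pred length_butlast length_greater_0_conv)
        have "u \<notin> Pre g"
        proof
          assume "u \<in> Pre g"
          then have "v \<in> Pre g" using bu butlast_Pre Pre_trans by metis
          then show False using vnP by simp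
        qed
        then have "u \<in> ?S" using u by (simp add: V'_def)
        then show False using vmax lu by fastforce
      qed
      then show "butlast u \<in> V'" using buV by (simp add: V'_def)
    qed
    have gV': "g \<in> V'" using g vnP by (auto simp: V'_def)
    have cardV: "card V = Suc (card V')" using card_Suc_Diff1[OF finV vV] by (simp add: V'_def)
    have "card V' < card V" using cardV by simp
    then obtain w' where w'l: "w' \<in> lists (X \<times> UNIV)" and w'e: "walk_edges w' = Tr V'" and w'r: "red w' = g"
      and w'len: "length w' = length g + 2 * (card V' - 1 - length g)"
      using less.hyps[OF _ pc' gV'] by blast
    define u where "u = butlast v"
    define a where "a = last v"
    have vua: "v = u @ [a]" using vne by (simp add: u_def a_def)
    have iu: "isred u" using iv by (simp add: u_def isred_butlast)
    have uV': "u \<in> V'"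
    proof -
      have "u \<in> V" using pc vV by (simp add: PC_def u_def)
      moreover have "u \<noteq> v" using vua by auto
      ultimately show ?thesis by (simp add: V'_def)
    qed
    have "u \<in> verts (walk_edges w')" using uV' w'e verts_Tr[OF pc'] by simp
    then obtain i where il: "i \<le> length w'" and iu_red: "red (take i w') = u" using visit by blast
    let ?x = "take i w'" and ?y = "drop i w'"
    define w where "w = (?x @ [a, inv_letter a]) @ ?y"
    have msv: "mstep u a = v" using mstep_red[OF iu, of a] red_isred[OF iv] vua by simp
    have r1: "red (?x @ [a]) = v" using iu_red msv by (simp add: red_snoc)
    have msu: "mstep v (inv_letter a) = u" using mstep_inv[OF iu, of a] msv by simp
    have r2: "red (?x @ [a, inv_letter a]) = u"
      using r1 msu red_snoc[of "?x @ [a]" "inv_letter a"] by simp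
    have e1: "edge_of u a = pe v" using vua by (simp add: pe_snoc')
    have "edge_of v (inv_letter a) = pe v \<longleftrightarrow> ((v \<in> Pre (mstep v (inv_letter a))) \<noteq> (v \<in> Pre v))"
      by (rule cross[OF iv iv vne])
    moreover have "v \<notin> Pre u" using vua Pre_len by fastforce
    ultimately have e2: "edge_of v (inv_letter a) = pe v" using msu by simp
    have we1: "walk_edges (?x @ [a, inv_letter a]) = insert (pe v) (walk_edges ?x)"
    proof -
      have "walk_edges ((?x @ [a]) @ [inv_letter a]) = insert (edge_of (red (?x @ [a])) (inv_letter a)) (walk_edges (?x @ [a]))"
        by (rule walk_edges_snoc)
      also have "walk_edges (?x @ [a]) = insert (edge_of (red ?x) a) (walk_edges ?x)"
        by (rule walk_edges_snoc)
      finally show ?thesis using r1 iu_red e1 e2 by simp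
    qed
    have img: "(\<lambda>j. edge_of (red ((?x @ [a, inv_letter a]) @ take j ?y)) (?y ! j)) ` {..<length ?y}
             = (\<lambda>j. edge_of (red (?x @ take j ?y)) (?y ! j)) ` {..<length ?y}"
      by (rule image_cong) (simp_all only: red_cancel_mid[OF iu_red r2])
    have "walk_edges w = insert (pe v) (walk_edges w')"
    proof -
      have "walk_edges w = walk_edges (?x @ [a, inv_letter a]) \<union>
          (\<lambda>j. edge_of (red ((?x @ [a, inv_letter a]) @ take j ?y)) (?y ! j)) ` {..<length ?y}"
        unfolding w_def by (rule walk_edges_append)
      moreover have "walk_edges w' = walk_edges ?x \<union>
          (\<lambda>j. edge_of (red (?x @ take j ?y)) (?y ! j)) ` {..<length ?y}"
        using walk_edges_append[of ?x ?y] by simp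
      ultimately show ?thesis using we1 img by auto
    qed
    also have "\<dots> = Tr V" using w'e vV vne by (auto simp: Tr_def V'_def)
    finally have we: "walk_edges w = Tr V" .
    have wr: "red w = g"
      unfolding w_def using red_cancel_mid[OF iu_red r2, of ?y] w'r by simp
    have "a \<in> X \<times> UNIV" using vl vua by auto
    then have "inv_letter a \<in> X \<times> UNIV" by (auto simp: inv_letter_def)
    then have wl: "w \<in> lists (X \<times> UNIV)"
      using w'l \<open>a \<in> X \<times> UNIV\<close> unfolding w_def by (auto dest: in_set_takeD in_set_dropD)
    have "card (Pre g) \<le> card V'" using PC_Pre[OF pc' gV'] pc' by (intro card_mono) (auto simp: PC_def)
    then have cg: "Suc (length g) \<le> card V'" by (simp only: card_Pre)
    have "length w = length w' + 2" using il by (simp add: w_def)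
    then have wlen: "length w = length g + 2 * (card V - 1 - length g)" using w'len cardV cg by simp
    show ?thesis using wl we wr wlen by blast
  qed
qed

lemma fim_len:
  assumes pc: "PC X V" and g: "g \<in> V"
  shows "fim_length X (Tr V, g) = length g + 2 * (card V - 1 - length g)"
  unfolding fim_length_def munn_def
proof (rule Least_equality)
  show "\<exists>w\<in>lists (X \<times> UNIV). length w = length g + 2 * (card V - 1 - length g) \<and> (walk_edges w, red w) = (Tr V, g)"
    using upper[OF pc g] by auto
next
  fix n assume "\<exists>w\<in>lists (X \<times> UNIV). length w = n \<and> (walk_edges w, red w) = (Tr V, g)"
  then obtain w where "length w = n" "walk_edges w = Tr V" "red w = g" by auto
  then show "length g + 2 * (card V - 1 - length g) \<le> n" using lower_bound[OF pc g] by auto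
qed



fun rn :: "nat \<Rightarrow> nat \<Rightarrow> nat \<Rightarrow> nat" where
  "rn p 0 0 = 1"
| "rn p 0 (Suc k) = 0"
| "rn p (Suc r) 0 = 1"
| "rn p (Suc r) (Suc k) = rn p r (Suc k) + rn p (r + p) k"

lemma rn_0[simp]: "rn p r 0 = 1"
  by (cases r) auto

lemma rn_step_real:
  fixes r k p :: nat
  assumes p: "p \<ge> 1"
  defines "D \<equiv> Suc k * p + r"
  shows "real r / real D * real (D choose Suc k) + real (r + p) / real D * real (D choose k)
       = real (Suc r) / real (Suc D) * real (Suc D choose Suc k)"
proof -
  have "k \<le> k * p" using p by simp
  moreover have "Suc k * p = p + k * p" by simp
  ultimately have Dpos: "D > k" using p unfolding D_def by linarith
  define c where "c = real (D choose k)"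
  define b where "b = real (D choose Suc k)"
  have E1: "real (Suc D choose Suc k) = c + b"
    unfolding c_def b_def by simp
  have E2: "real (Suc D) * c = real (Suc k) * (c + b)"
  proof -
    have "Suc D * (D choose k) = (Suc D choose Suc k) * Suc k" by (rule Suc_times_binomial_eq)
    then have "real (Suc D) * c = real (Suc D choose Suc k) * real (Suc k)"
      unfolding c_def by (metis of_nat_mult)
    then show ?thesis using E1 by (simp add: mult.commute)
  qed
  have b: "b = (real D - real k) * c / real (Suc k)"
    using E2 by (simp add: field_simps)
  have Dr: "real D = real (Suc k) * real p + real r" unfolding D_def by (simp add: algebra_simps)
  have D0: "real D > 0" using Dpos by simp
  have k1: "real (Suc k) = real k + 1" by simp
  have num: "real r * (real D - real k) + (real r + real p) * (real k + 1) = (real r + 1) * real D"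
    using Dr by (simp add: algebra_simps)
  have bk: "(real k + 1) * b = (real D - real k) * c" using E2 by (simp add: algebra_simps)
  have kp: "real k + 1 > 0" by simp
  have "(real r * b + real (r + p) * c) * (real k + 1) = real r * ((real k + 1) * b) + (real r + real p) * (real k + 1) * c"
    by (simp add: algebra_simps)
  also have "\<dots> = (real r * (real D - real k) + (real r + real p) * (real k + 1)) * c"
    unfolding bk by (simp add: algebra_simps)
  also have "\<dots> = (real r + 1) * c * real D" unfolding num by simp
  finally have L0: "(real r * b + real (r + p) * c) * (real k + 1) = (real r + 1) * c * real D" .
  have L: "real r / real D * b + real (r + p) / real D * c = (real r + 1) * c / (real k + 1)"
  proof -
    have "real r / real D * b + real (r + p) / real D * c = (real r * b + real (r + p) * c) / real D"
      using D0 by (simp add: field_simps)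
    also have "\<dots> = (real r + 1) * c / (real k + 1)"
      using L0 D0 kp by (simp add: frac_eq_eq)
    finally show ?thesis .
  qed
  have cb0: "(c + b) * (real k + 1) = c * (real D + 1)"
    using bk by (simp add: algebra_simps)
  have R: "real (Suc r) / real (Suc D) * (c + b) = (real r + 1) * c / (real k + 1)"
  proof -
    have "real (Suc r) / real (Suc D) * (c + b) = (real r + 1) * (c + b) / (real D + 1)" by (simp add: add.commute)
    also have "\<dots> = (real r + 1) * c / (real k + 1)"
    proof -
      have X: "(real r + 1) * ((c + b) * (real k + 1)) = (real r + 1) * (c * (real D + 1))" using cb0 by simp
      have "(real r + 1) * (c + b) / (real D + 1) = (real r + 1) * c / (real k + 1) \<longleftrightarrow>
            (real r + 1) * (c + b) * (real k + 1) = (real r + 1) * c * (real D + 1)"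
        by (rule frac_eq_eq) (use D0 kp in auto)
      then show ?thesis using X by (simp add: mult.assoc)
    qed
    finally show ?thesis .
  qed
  show ?thesis using L R E1 unfolding b_def c_def by simp
qed

lemma rn_real_gen:
  "p \<ge> 1 \<Longrightarrow> real (rn p r k) = (if r = 0 \<and> k = 0 then 1 else real r / real (k * p + r) * real ((k * p + r) choose k))"
proof (induction p r k rule: rn.induct)
  case (1 p) then show ?case by simp
next
  case (2 p k) then show ?case by simp
next
  case (3 p r) then show ?case by simp
next
  case (4 p r k)
  define D where "D = Suc k * p + r"
  have h1: "real (rn p r (Suc k)) = real r / real D * real (D choose Suc k)"
    using 4 by (simp add: D_def)
  have e2: "k * p + (r + p) = D" by (simp add: D_def)
  have h2: "real (rn p (r + p) k) = real (r + p) / real D * real (D choose k)"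
    using 4 e2 by simp
  have e3: "Suc k * p + Suc r = Suc D" by (simp add: D_def)
  have "real (rn p (Suc r) (Suc k)) = real r / real D * real (D choose Suc k) + real (r + p) / real D * real (D choose k)"
    using h1 h2 by simp
  also have "\<dots> = real (Suc r) / real (Suc D) * real (Suc D choose Suc k)"
    unfolding D_def by (rule rn_step_real[OF 4(3)])
  finally show ?case using e3 by simp
qed

lemma rn_R: "p \<ge> 1 \<Longrightarrow> r \<ge> 1 \<Longrightarrow> real (rn p r k) = R p r k"
  using rn_real_gen[of p r k] by (simp add: R_def)



definition L :: "'a set \<Rightarrow> 'a letter set" where
  "L X = X \<times> (UNIV :: bool set)"

definition ch :: "'a set \<Rightarrow> 'a letter list \<Rightarrow> 'a letter list set" where
  "ch X u = {c. isred c \<and> c \<in> lists (L X) \<and> c \<noteq> [] \<and> butlast c = u}"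

definition cfg :: "'a set \<Rightarrow> 'a letter list set \<Rightarrow> 'a letter list set \<Rightarrow> bool" where
  "cfg X S W = (finite W \<and> (\<forall>w\<in>W. isred w \<and> w \<in> lists (L X) \<and> w \<noteq> [] \<and> (w \<in> S \<or> butlast w \<in> W)))"

definition AC :: "'a set \<Rightarrow> 'a letter list set \<Rightarrow> bool" where
  "AC X S = (finite S \<and> (\<forall>s\<in>S. isred s \<and> s \<in> lists (L X) \<and> s \<noteq> []) \<and> (\<forall>s\<in>S. \<forall>s'\<in>S. s \<in> Pre s' \<longrightarrow> s = s'))"

lemma card_L: "finite X \<Longrightarrow> card (L X) = 2 * card X"
  unfolding L_def by (simp add: card_cartesian_product)

lemma finite_L: "finite X \<Longrightarrow> finite (L X)"
  unfolding L_def by simp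

lemma inv_L: "b \<in> L X \<Longrightarrow> inv_letter b \<in> L X"
  by (auto simp: L_def inv_letter_def)

lemma ch_eq:
  assumes "isred u" "u \<in> lists (L X)"
  shows "ch X u = (\<lambda>b. u @ [b]) ` {b \<in> L X. u = [] \<or> last u \<noteq> inv_letter b}"
proof
  show "ch X u \<subseteq> (\<lambda>b. u @ [b]) ` {b \<in> L X. u = [] \<or> last u \<noteq> inv_letter b}"
  proof
    fix c assume c: "c \<in> ch X u"
    then have c1: "isred c" "c \<in> lists (L X)" "c \<noteq> []" "butlast c = u" by (auto simp: ch_def)
    then have cu: "c = u @ [last c]" by (metis append_butlast_last_id)
    have "last c \<in> L X" using c1 by (metis cu in_lists_conv_set in_set_conv_decomp)
    moreover have "u = [] \<or> last u \<noteq> inv_letter (last c)" using c1(1) cu isred_snoc by metis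
    ultimately show "c \<in> (\<lambda>b. u @ [b]) ` {b \<in> L X. u = [] \<or> last u \<noteq> inv_letter b}"
      using cu by blast
  qed
next
  show "(\<lambda>b. u @ [b]) ` {b \<in> L X. u = [] \<or> last u \<noteq> inv_letter b} \<subseteq> ch X u"
    using assms by (auto simp: ch_def isred_snoc)
qed

lemma card_ch:
  assumes X: "finite X" and u: "isred u" "u \<in> lists (L X)"
  shows "finite (ch X u)" "card (ch X u) = (if u = [] then 2 * card X else 2 * card X - 1)"
proof -
  have inj: "inj (\<lambda>b. u @ [b])" by (rule injI) simp
  let ?B = "{b \<in> L X. u = [] \<or> last u \<noteq> inv_letter b}"
  have fB: "finite ?B" using finite_L[OF X] by simp
  show "finite (ch X u)" unfolding ch_eq[OF u] using fB by simp
  have cB: "card ?B = (if u = [] then 2 * card X else 2 * card X - 1)"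
  proof (cases "u = []")
    case True then show ?thesis using card_L[OF X] by simp
  next
    case False
    have lu: "last u \<in> L X" using u(2) False by (metis in_lists_conv_set last_in_set subsetD)
    have "?B = L X - {inv_letter (last u)}" using False by auto
    then show ?thesis using False card_L[OF X] inv_L[OF lu] finite_L[OF X] by (simp add: card_Diff_singleton)
  qed
  show "card (ch X u) = (if u = [] then 2 * card X else 2 * card X - 1)"
    unfolding ch_eq[OF u] using cB card_image[OF inj_on_subset[OF inj]] by simp
qed

lemma cfg_root: "cfg X S W \<Longrightarrow> w \<in> W \<Longrightarrow> \<exists>s\<in>S. s \<in> Pre w"
proof (induction "length w" arbitrary: w rule: less_induct)
  case less
  have w: "w \<noteq> []" "w \<in> S \<or> butlast w \<in> W" using less.prems by (auto simp: cfg_def)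
  show ?case
  proof (cases "w \<in> S")
    case True then show ?thesis by (intro bexI[of _ w]) auto
  next
    case False
    then have bw: "butlast w \<in> W" using w by simp
    have "length (butlast w) < length w" using w(1) by simp
    then obtain s where "s \<in> S" "s \<in> Pre (butlast w)" using less.hyps[OF _ less.prems(1) bw] by blast
    then show ?thesis using butlast_Pre Pre_trans by blast
  qed
qed

lemma Pre_proper: "x \<in> Pre y \<Longrightarrow> x \<noteq> y \<Longrightarrow> x \<in> Pre (butlast y)"
proof -
  assume xy: "x \<in> Pre y" "x \<noteq> y"
  then have "y \<noteq> []" by auto
  then have "y = butlast y @ [last y]" by simp
  then have "Pre y = insert y (Pre (butlast y))" by (metis Pre_snoc)
  then show ?thesis using xy by auto
qed

lemma Pre_same_len: "x \<in> Pre y \<Longrightarrow> length x = length y \<Longrightarrow> x = y"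
  unfolding Pre_prefix by auto



lemma s_notin1: "AC X S \<Longrightarrow> s \<in> S \<Longrightarrow> cfg X (S - {s}) W \<Longrightarrow> s \<notin> W"
proof
  assume ac: "AC X S" and s: "s \<in> S" and c: "cfg X (S - {s}) W" and sW: "s \<in> W"
  obtain s' where s': "s' \<in> S - {s}" "s' \<in> Pre s" using cfg_root[OF c sW] by blast
  then have "s' = s" using ac s unfolding AC_def by blast
  then show False using s' by simp
qed

lemma s_notin2: "AC X S \<Longrightarrow> s \<in> S \<Longrightarrow> cfg X ((S - {s}) \<union> ch X s) W \<Longrightarrow> s \<notin> W"
proof
  assume ac: "AC X S" and s: "s \<in> S" and c: "cfg X ((S - {s}) \<union> ch X s) W" and sW: "s \<in> W"
  obtain s' where s': "s' \<in> (S - {s}) \<union> ch X s" "s' \<in> Pre s" using cfg_root[OF c sW] by blast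
  show False
  proof (cases "s' \<in> S - {s}")
    case True
    then have "s' = s" using ac s s'(2) unfolding AC_def by blast
    then show False using True by simp
  next
    case False
    then have "s' \<in> ch X s" using s'(1) by blast
    then have "butlast s' = s" "s' \<noteq> []" by (auto simp: ch_def)
    then have "length s' = Suc (length s)" by (metis One_nat_def Suc_pred length_butlast length_greater_0_conv)
    then show False using Pre_len[OF s'(2)] by simp
  qed
qed

lemma AC_remove: "AC X S \<Longrightarrow> AC X (S - {s})"
  unfolding AC_def by blast

lemma AC_expand:
  assumes X: "finite X" and ac: "AC X S" and s: "s \<in> S"
  shows "AC X ((S - {s}) \<union> ch X s)" "card ((S - {s}) \<union> ch X s) = (card S - 1) + (2 * card X - 1)"
proof -
  have sp: "isred s" "s \<in> lists (L X)" "s \<noteq> []" using ac s by (auto simp: AC_def)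
  have fS: "finite S" using ac by (simp add: AC_def)
  have fch: "finite (ch X s)" and cch: "card (ch X s) = 2 * card X - 1"
    using card_ch[OF X sp(1,2)] sp(3) by auto
  have anti: "\<And>a b. a \<in> S \<Longrightarrow> b \<in> S \<Longrightarrow> a \<in> Pre b \<Longrightarrow> a = b" using ac by (auto simp: AC_def)
  have chs: "\<And>c. c \<in> ch X s \<Longrightarrow> butlast c = s \<and> c \<noteq> []" by (auto simp: ch_def)
  have chlen: "\<And>c. c \<in> ch X s \<Longrightarrow> length c = Suc (length s)"
    using chs by (metis One_nat_def Suc_pred length_butlast length_greater_0_conv)
  have a: "\<forall>x\<in>(S - {s}) \<union> ch X s. \<forall>y\<in>(S - {s}) \<union> ch X s. x \<in> Pre y \<longrightarrow> x = y"
  proof (intro ballI impI)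
    fix x y assume x: "x \<in> (S - {s}) \<union> ch X s" and y: "y \<in> (S - {s}) \<union> ch X s" and xy: "x \<in> Pre y"
    show "x = y"
    proof (cases "x \<in> ch X s")
      case xc: True
      show ?thesis
      proof (cases "y \<in> ch X s")
        case True
        then show ?thesis using xc chlen Pre_same_len xy by metis
      next
        case False
        then have yS: "y \<in> S" "y \<noteq> s" using y by auto
        have "s \<in> Pre x" using chs[OF xc] butlast_Pre by metis
        then have "s \<in> Pre y" using xy Pre_trans by blast
        then have "s = y" using anti s yS(1) by blast
        then show ?thesis using yS by simp
      qed
    next
      case xn: False
      then have xS: "x \<in> S" "x \<noteq> s" using x by auto
      show ?thesis
      proof (cases "y \<in> ch X s")
        case True
        show ?thesis
        proof (rule ccontr)
          assume "x \<noteq> y"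
          then have "x \<in> Pre (butlast y)" using Pre_proper xy by blast
          then have "x \<in> Pre s" using chs[OF True] by simp
          then have "x = s" using anti xS(1) s by blast
          then show False using xS by simp
        qed
      next
        case False
        then show ?thesis using y xS anti xy by blast
      qed
    qed
  qed
  have el: "\<forall>x\<in>(S - {s}) \<union> ch X s. isred x \<and> x \<in> lists (L X) \<and> x \<noteq> []"
    using ac by (auto simp: AC_def ch_def)
  show "AC X ((S - {s}) \<union> ch X s)" unfolding AC_def using fS fch a el by blast
  have disj: "(S - {s}) \<inter> ch X s = {}"
  proof (rule ccontr)
    assume "(S - {s}) \<inter> ch X s \<noteq> {}"
    then obtain c where c: "c \<in> S" "c \<in> ch X s" by blast
    have "s \<in> Pre c" using chs[OF c(2)] butlast_Pre by metis
    then have "s = c" using anti s c(1) by blast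
    then show False using chlen[OF c(2)] by simp
  qed
  show "card ((S - {s}) \<union> ch X s) = (card S - 1) + (2 * card X - 1)"
    using card_Un_disjoint[OF _ fch disj] fS s cch by simp
qed

lemma split_set:
  assumes ac: "AC X S" and s: "s \<in> S"
  shows "{W. cfg X S W \<and> card W = Suc k} =
         {W. cfg X (S - {s}) W \<and> card W = Suc k} \<union> insert s ` {W. cfg X ((S - {s}) \<union> ch X s) W \<and> card W = k}"
    (is "?A = ?A1 \<union> insert s ` ?A2")
proof
  show "?A \<subseteq> ?A1 \<union> insert s ` ?A2"
  proof
    fix W assume W: "W \<in> ?A"
    then have c: "cfg X S W" and cW: "card W = Suc k" by auto
    have fW: "finite W" using c by (simp add: cfg_def)
    show "W \<in> ?A1 \<union> insert s ` ?A2"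
    proof (cases "s \<in> W")
      case False
      have "cfg X (S - {s}) W" using c False unfolding cfg_def by blast
      then show ?thesis using cW by simp
    next
      case True
      have "cfg X ((S - {s}) \<union> ch X s) (W - {s})"
        unfolding cfg_def
      proof (intro conjI ballI)
        show "finite (W - {s})" using fW by simp
        fix w assume w: "w \<in> W - {s}"
        then show "isred w" "w \<in> lists (L X)" "w \<noteq> []" using c by (auto simp: cfg_def)
        have "w \<in> S \<or> butlast w \<in> W" using c w by (auto simp: cfg_def)
        moreover have "butlast w = s \<Longrightarrow> w \<in> ch X s" using c w by (auto simp: cfg_def ch_def)
        ultimately show "w \<in> (S - {s}) \<union> ch X s \<or> butlast w \<in> W - {s}" using w by blast
      qed
      moreover have "card (W - {s}) = k" using cW True fW by simp
      moreover have "W = insert s (W - {s})" using True by auto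
      ultimately show ?thesis by blast
    qed
  qed
next
  show "?A1 \<union> insert s ` ?A2 \<subseteq> ?A"
  proof
    fix W assume "W \<in> ?A1 \<union> insert s ` ?A2"
    then show "W \<in> ?A"
    proof
      assume "W \<in> ?A1"
      then show "W \<in> ?A" unfolding cfg_def by blast
    next
      assume "W \<in> insert s ` ?A2"
      then obtain W' where W': "W' \<in> ?A2" "W = insert s W'" by blast
      have c': "cfg X ((S - {s}) \<union> ch X s) W'" using W' by simp
      have sn: "s \<notin> W'" using s_notin2[OF ac s c'] .
      have fW': "finite W'" using c' by (simp add: cfg_def)
      have sp: "isred s" "s \<in> lists (L X)" "s \<noteq> []" using ac s by (auto simp: AC_def)
      have "cfg X S (insert s W')"
        unfolding cfg_def
      proof (intro conjI ballI)
        show "finite (insert s W')" using fW' by simp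
        fix w assume w: "w \<in> insert s W'"
        then show "isred w" "w \<in> lists (L X)" "w \<noteq> []" using c' sp by (auto simp: cfg_def)
        show "w \<in> S \<or> butlast w \<in> insert s W'"
        proof (cases "w = s")
          case True then show ?thesis using s by simp
        next
          case False
          then have "w \<in> W'" using w by simp
          then have "w \<in> (S - {s}) \<union> ch X s \<or> butlast w \<in> W'" using c' by (auto simp: cfg_def)
          then show ?thesis by (auto simp: ch_def)
        qed
      qed
      moreover have "card (insert s W') = Suc k" using W' sn fW' by simp
      ultimately show "W \<in> ?A" using W' by simp
    qed
  qed
qed

lemma count:
  assumes X: "finite X" and p: "p = 2 * card X - 1"
  shows "AC X S \<Longrightarrow> finite {W. cfg X S W \<and> card W = k} \<and> card {W. cfg X S W \<and> card W = k} = rn p (card S) k"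
proof (induction k arbitrary: S)
  case 0
  have "{W. cfg X S W \<and> card W = 0} = {{}}" by (auto simp: cfg_def)
  then show ?case by simp
next
  case (Suc k)
  note outer = Suc.IH
  show ?case using Suc.prems
  proof (induction "card S" arbitrary: S)
    case 0
    then have S0: "S = {}" by (simp add: AC_def)
    have E: "{W. cfg X S W \<and> card W = Suc k} = {}"
      using cfg_root S0 by (fastforce simp: card_Suc_eq)
    have "finite {W. cfg X S W \<and> card W = Suc k}" "card {W. cfg X S W \<and> card W = Suc k} = 0"
      by (simp_all only: E finite.emptyI card.empty)
    moreover have "rn p (card S) (Suc k) = 0" using S0 by simp
    ultimately show ?case by auto
  next
    case (Suc r S)
    have ac: "AC X S" using Suc.prems .
    have "S \<noteq> {}" using Suc.hyps(2) by auto
    then obtain s where s: "s \<in> S" by blast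
    have fS: "finite S" using ac by (simp add: AC_def)
    have c1: "card (S - {s}) = r" using Suc.hyps(2) fS s by simp
    have ih1: "finite {W. cfg X (S - {s}) W \<and> card W = Suc k} \<and> card {W. cfg X (S - {s}) W \<and> card W = Suc k} = rn p r (Suc k)"
      using Suc.hyps(1)[OF c1[symmetric] AC_remove[OF ac]] c1 by simp
    have ac2: "AC X ((S - {s}) \<union> ch X s)" and c2: "card ((S - {s}) \<union> ch X s) = r + p"
      using AC_expand[OF X ac s] Suc.hyps(2) p by auto
    have ih2: "finite {W. cfg X ((S - {s}) \<union> ch X s) W \<and> card W = k} \<and>
        card {W. cfg X ((S - {s}) \<union> ch X s) W \<and> card W = k} = rn p (r + p) k"
      using outer[OF ac2] c2 by simp
    let ?A1 = "{W. cfg X (S - {s}) W \<and> card W = Suc k}"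
    let ?A2 = "{W. cfg X ((S - {s}) \<union> ch X s) W \<and> card W = k}"
    have inj: "inj_on (insert s) ?A2"
    proof (rule inj_onI)
      fix A B assume A: "A \<in> ?A2" and B: "B \<in> ?A2" and e: "insert s A = insert s B"
      have "s \<notin> A" "s \<notin> B" using s_notin2[OF ac s] A B by auto
      then show "A = B" using e by (metis insert_ident)
    qed
    have disj: "?A1 \<inter> insert s ` ?A2 = {}"
      using s_notin1[OF ac s] by auto
    have eq: "{W. cfg X S W \<and> card W = Suc k} = ?A1 \<union> insert s ` ?A2" by (rule split_set[OF ac s])
    have f2: "finite (insert s ` ?A2)" using ih2 by simp
    have "card (?A1 \<union> insert s ` ?A2) = card ?A1 + card (insert s ` ?A2)"
      by (rule card_Un_disjoint) (use ih1 f2 disj in auto)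
    also have "card (insert s ` ?A2) = card ?A2" by (rule card_image[OF inj])
    finally have "card {W. cfg X S W \<and> card W = Suc k} = rn p r (Suc k) + rn p (r + p) k"
      using eq ih1 ih2 by simp
    then show ?case using eq ih1 f2 Suc.hyps(2)[symmetric] by simp
  qed
qed



definition Wd :: "'a set \<Rightarrow> nat \<Rightarrow> 'a letter list set" where
  "Wd X t = {g. isred g \<and> g \<in> lists (L X) \<and> length g = t}"

definition Sl :: "'a set \<Rightarrow> 'a letter list \<Rightarrow> 'a letter list set" where
  "Sl X g = {c. isred c \<and> c \<in> lists (L X) \<and> c \<noteq> [] \<and> butlast c \<in> Pre g \<and> c \<notin> Pre g}"

lemma Pre_lists: "g \<in> lists A \<Longrightarrow> c \<in> Pre g \<Longrightarrow> c \<in> lists A"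
  unfolding Pre_prefix by auto

lemma Wd_0: "Wd X 0 = {[]}"
  by (auto simp: Wd_def)

lemma Wd_Suc: "Wd X (Suc t) = (\<Union>u\<in>Wd X t. ch X u)"
proof
  show "Wd X (Suc t) \<subseteq> (\<Union>u\<in>Wd X t. ch X u)"
  proof
    fix c assume c: "c \<in> Wd X (Suc t)"
    then have "c \<in> ch X (butlast c)" by (auto simp: Wd_def ch_def)
    moreover have "butlast c \<in> Wd X t" using c
      by (auto simp: Wd_def isred_butlast dest: in_set_butlastD)
    ultimately show "c \<in> (\<Union>u\<in>Wd X t. ch X u)" by blast
  qed
next
  show "(\<Union>u\<in>Wd X t. ch X u) \<subseteq> Wd X (Suc t)"
    by (auto simp: Wd_def ch_def)
qed

lemma card_Wd:
  assumes X: "finite X"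
  shows "finite (Wd X t) \<and> card (Wd X t) = (if t = 0 then 1 else 2 * card X * (2 * card X - 1) ^ (t - 1))"
proof (induction t)
  case 0
  then show ?case by (simp add: Wd_0)
next
  case (Suc t)
  have wp: "\<And>u. u \<in> Wd X t \<Longrightarrow> isred u \<and> u \<in> lists (L X)" by (auto simp: Wd_def)
  have fin: "\<And>u. u \<in> Wd X t \<Longrightarrow> finite (ch X u)" using card_ch(1)[OF X] wp by blast
  have cc: "\<And>u. u \<in> Wd X t \<Longrightarrow> card (ch X u) = (if t = 0 then 2 * card X else 2 * card X - 1)"
  proof -
    fix u assume u: "u \<in> Wd X t"
    have "u = [] \<longleftrightarrow> t = 0" using u by (auto simp: Wd_def)
    then show "card (ch X u) = (if t = 0 then 2 * card X else 2 * card X - 1)"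
      using card_ch(2)[OF X] wp[OF u] by simp
  qed
  have disj: "\<forall>u\<in>Wd X t. \<forall>v\<in>Wd X t. u \<noteq> v \<longrightarrow> ch X u \<inter> ch X v = {}"
    by (auto simp: ch_def)
  have "card (Wd X (Suc t)) = (\<Sum>u\<in>Wd X t. card (ch X u))"
    unfolding Wd_Suc by (rule card_UN_disjoint) (use Suc.IH fin disj in auto)
  also have "\<dots> = card (Wd X t) * (if t = 0 then 2 * card X else 2 * card X - 1)"
    using cc by simp
  finally have "card (Wd X (Suc t)) = card (Wd X t) * (if t = 0 then 2 * card X else 2 * card X - 1)" .
  moreover have "finite (Wd X (Suc t))" unfolding Wd_Suc using Suc.IH fin by blast
  ultimately show ?case using Suc.IH by (cases t) auto
qed

lemma Sl_props:
  assumes X: "finite X" and g: "g \<in> Wd X t"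
  shows "AC X (Sl X g)" "card (Sl X g) = 2 * card X + t * (2 * card X - 2)"
proof -
  have ig: "isred g" and gl: "g \<in> lists (L X)" and lg: "length g = t" using g by (auto simp: Wd_def)
  have pp: "\<And>u. u \<in> Pre g \<Longrightarrow> isred u \<and> u \<in> lists (L X)"
    using Pre_isred[OF ig] Pre_lists[OF gl] by blast
  let ?U = "\<Union>u\<in>Pre g. ch X u"
  have fin: "\<And>u. u \<in> Pre g \<Longrightarrow> finite (ch X u)" using card_ch(1)[OF X] pp by blast
  have finU: "finite ?U" using fin by simp
  have U: "?U = Sl X g \<union> (Pre g - {[]})"
  proof
    show "?U \<subseteq> Sl X g \<union> (Pre g - {[]})" by (auto simp: ch_def Sl_def)
  next
    show "Sl X g \<union> (Pre g - {[]}) \<subseteq> ?U"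
    proof
      fix c assume c: "c \<in> Sl X g \<union> (Pre g - {[]})"
      show "c \<in> ?U"
      proof (cases "c \<in> Sl X g")
        case True then show ?thesis by (auto simp: Sl_def ch_def)
      next
        case False
        then have c2: "c \<in> Pre g" "c \<noteq> []" using c by auto
        have "butlast c \<in> Pre g" using c2 butlast_Pre Pre_trans by blast
        moreover have "c \<in> ch X (butlast c)" using c2 pp by (auto simp: ch_def)
        ultimately show ?thesis by blast
      qed
    qed
  qed
  have disjU: "Sl X g \<inter> (Pre g - {[]}) = {}" by (auto simp: Sl_def)
  have disj: "\<forall>u\<in>Pre g. \<forall>v\<in>Pre g. u \<noteq> v \<longrightarrow> ch X u \<inter> ch X v = {}"
    by (auto simp: ch_def)
  have "card ?U = (\<Sum>u\<in>Pre g. card (ch X u))"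
    by (rule card_UN_disjoint) (use fin disj in auto)
  also have "\<dots> = (\<Sum>u\<in>Pre g. if u = [] then 2 * card X else 2 * card X - 1)"
    by (rule sum.cong) (use card_ch(2)[OF X] pp in auto)
  also have "\<dots> = 2 * card X + (\<Sum>u\<in>Pre g - {[]}. if u = [] then 2 * card X else 2 * card X - 1)"
    by (subst sum.remove[of _ "[]"]) auto
  also have "(\<Sum>u\<in>Pre g - {[]}. if u = [] then 2 * card X else 2 * card X - 1) = t * (2 * card X - 1)"
    using card_Pre[of g] lg by (simp add: card_Diff_singleton)
  finally have cU: "card ?U = 2 * card X + t * (2 * card X - 1)" .
  have fS: "finite (Sl X g)" using finU U by (metis finite_Un)
  have "card ?U = card (Sl X g) + card (Pre g - {[]})"
    unfolding U by (rule card_Un_disjoint) (use fS disjU in auto)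
  moreover have "card (Pre g - {[]}) = t" using card_Pre[of g] lg by (simp add: card_Diff_singleton)
  ultimately have "card (Sl X g) = 2 * card X + t * (2 * card X - 1) - t" using cU by simp
  also have "\<dots> = 2 * card X + t * (2 * card X - 2)"
  proof (cases "card X")
    case 0 then show ?thesis by simp
  next
    case (Suc n) then show ?thesis by (simp add: algebra_simps)
  qed
  finally show "card (Sl X g) = 2 * card X + t * (2 * card X - 2)" .
  have anti: "\<forall>s\<in>Sl X g. \<forall>s'\<in>Sl X g. s \<in> Pre s' \<longrightarrow> s = s'"
  proof (intro ballI impI)
    fix s s' assume s: "s \<in> Sl X g" and s': "s' \<in> Sl X g" and ss: "s \<in> Pre s'"
    show "s = s'"
    proof (rule ccontr)
      assume "s \<noteq> s'"
      then have "s \<in> Pre (butlast s')" using Pre_proper ss by blast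
      moreover have "butlast s' \<in> Pre g" using s' by (simp add: Sl_def)
      ultimately have "s \<in> Pre g" using Pre_trans by blast
      then show False using s by (simp add: Sl_def)
    qed
  qed
  have el: "\<forall>s\<in>Sl X g. isred s \<and> s \<in> lists (L X) \<and> s \<noteq> []" by (simp add: Sl_def)
  show "AC X (Sl X g)" unfolding AC_def using fS anti el by blast
qed

lemma cfg_disj: "cfg X (Sl X g) W \<Longrightarrow> W \<inter> Pre g = {}"
proof (rule ccontr)
  assume c: "cfg X (Sl X g) W" and "W \<inter> Pre g \<noteq> {}"
  then obtain w where w: "w \<in> W" "w \<in> Pre g" by blast
  obtain s where s: "s \<in> Sl X g" "s \<in> Pre w" using cfg_root[OF c w(1)] by blast
  have "s \<in> Pre g" using s(2) w(2) Pre_trans by blast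
  then show False using s(1) by (simp add: Sl_def)
qed

lemma lists_L: "lists (X \<times> UNIV) = lists (L X)"
  by (simp add: L_def)

lemma V_bij:
  assumes g: "g \<in> Wd X t"
  shows "{V. PC X V \<and> g \<in> V \<and> card V = Suc (t + k)} = (\<lambda>W. W \<union> Pre g) ` {W. cfg X (Sl X g) W \<and> card W = k}"
    and "inj_on (\<lambda>W. W \<union> Pre g) {W. cfg X (Sl X g) W \<and> card W = k}"
proof -
  have ig: "isred g" and gl: "g \<in> lists (L X)" and lg: "length g = t" using g by (auto simp: Wd_def)
  show "inj_on (\<lambda>W. W \<union> Pre g) {W. cfg X (Sl X g) W \<and> card W = k}"
  proof (rule inj_onI)
    fix A B assume A: "A \<in> {W. cfg X (Sl X g) W \<and> card W = k}" and B: "B \<in> {W. cfg X (Sl X g) W \<and> card W = k}"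
      and e: "A \<union> Pre g = B \<union> Pre g"
    have "A \<inter> Pre g = {}" "B \<inter> Pre g = {}" using A B cfg_disj by auto
    then show "A = B" using e by blast
  qed
  show "{V. PC X V \<and> g \<in> V \<and> card V = Suc (t + k)} = (\<lambda>W. W \<union> Pre g) ` {W. cfg X (Sl X g) W \<and> card W = k}"
  proof
    show "{V. PC X V \<and> g \<in> V \<and> card V = Suc (t + k)} \<subseteq> (\<lambda>W. W \<union> Pre g) ` {W. cfg X (Sl X g) W \<and> card W = k}"
    proof
      fix V assume V: "V \<in> {V. PC X V \<and> g \<in> V \<and> card V = Suc (t + k)}"
      then have pc: "PC X V" and gV: "g \<in> V" and cV: "card V = Suc (t + k)" by auto
      have PV: "Pre g \<subseteq> V" using PC_Pre[OF pc gV] .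
      have fV: "finite V" using pc by (simp add: PC_def)
      have "cfg X (Sl X g) (V - Pre g)"
        unfolding cfg_def
      proof (intro conjI ballI)
        show "finite (V - Pre g)" using fV by simp
        fix w assume w: "w \<in> V - Pre g"
        then show "isred w" "w \<in> lists (L X)" using pc by (auto simp: PC_def L_def)
        show "w \<noteq> []" using w by auto
        have "butlast w \<in> V" using pc w by (simp add: PC_def)
        then show "w \<in> Sl X g \<or> butlast w \<in> V - Pre g"
          using w pc by (auto simp: Sl_def PC_def L_def)
      qed
      moreover have "card (V - Pre g) = k" using PV fV cV card_Pre[of g] lg by (simp add: card_Diff_subset)
      moreover have "V = (V - Pre g) \<union> Pre g" using PV by auto
      ultimately show "V \<in> (\<lambda>W. W \<union> Pre g) ` {W. cfg X (Sl X g) W \<and> card W = k}" by blast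
    qed
  next
    show "(\<lambda>W. W \<union> Pre g) ` {W. cfg X (Sl X g) W \<and> card W = k} \<subseteq> {V. PC X V \<and> g \<in> V \<and> card V = Suc (t + k)}"
    proof
      fix V assume "V \<in> (\<lambda>W. W \<union> Pre g) ` {W. cfg X (Sl X g) W \<and> card W = k}"
      then obtain W where W: "cfg X (Sl X g) W" "card W = k" "V = W \<union> Pre g" by blast
      have fW: "finite W" using W(1) by (simp add: cfg_def)
      have pc: "PC X V"
        unfolding PC_def
      proof (intro conjI ballI)
        show "finite V" using fW W(3) by simp
        show "[] \<in> V" using W(3) by simp
        fix v assume v: "v \<in> V"
        have H: "isred v \<and> v \<in> lists (X \<times> UNIV) \<and> butlast v \<in> V"
        proof (cases "v \<in> Pre g")
          case True
          then show ?thesis using Pre_isred[OF ig] Pre_lists[OF gl] butlast_Pre Pre_trans W(3)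
            by (metis UnI2 lists_L)
        next
          case False
          then have vW: "v \<in> W" using v W(3) by simp
          then have "isred v" "v \<in> lists (L X)" "v \<in> Sl X g \<or> butlast v \<in> W" using W(1) by (auto simp: cfg_def)
          then show ?thesis using W(3) by (auto simp: Sl_def L_def)
        qed
        then show "isred v" "v \<in> lists (X \<times> UNIV)" "butlast v \<in> V" by auto
      qed
      have "card V = card W + card (Pre g)"
        unfolding W(3) by (rule card_Un_disjoint) (use fW cfg_disj[OF W(1)] in auto)
      then have "card V = Suc (t + k)" using W(2) card_Pre[of g] lg by simp
      then show "V \<in> {V. PC X V \<and> g \<in> V \<and> card V = Suc (t + k)}" using pc W(3) by simp
    qed
  qed
qed

lemma fixed_g_count:
  assumes X: "finite X" and p: "p = 2 * card X - 1" and g: "g \<in> Wd X t"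
  shows "finite {V. PC X V \<and> g \<in> V \<and> card V = Suc (t + k)}"
    "card {V. PC X V \<and> g \<in> V \<and> card V = Suc (t + k)} = rn p (2 * card X + t * (2 * card X - 2)) k"
proof -
  have c: "finite {W. cfg X (Sl X g) W \<and> card W = k} \<and> card {W. cfg X (Sl X g) W \<and> card W = k} = rn p (card (Sl X g)) k"
    by (rule count[OF X p Sl_props(1)[OF X g]])
  show "finite {V. PC X V \<and> g \<in> V \<and> card V = Suc (t + k)}" unfolding V_bij(1)[OF g] using c by simp
  show "card {V. PC X V \<and> g \<in> V \<and> card V = Suc (t + k)} = rn p (2 * card X + t * (2 * card X - 2)) k"
    unfolding V_bij(1)[OF g] card_image[OF V_bij(2)[OF g]] using c Sl_props(2)[OF X g] by simp
qed



definition Pr :: "'a set \<Rightarrow> nat \<Rightarrow> nat \<Rightarrow> ('a letter list set \<times> 'a letter list) set" where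
  "Pr X t k = {(V, g). PC X V \<and> g \<in> V \<and> length g = t \<and> card V = Suc (t + k)}"

lemma Pr_UN: "Pr X t k = (\<Union>g\<in>Wd X t. (\<lambda>V. (V, g)) ` {V. PC X V \<and> g \<in> V \<and> card V = Suc (t + k)})"
proof
  show "Pr X t k \<subseteq> (\<Union>g\<in>Wd X t. (\<lambda>V. (V, g)) ` {V. PC X V \<and> g \<in> V \<and> card V = Suc (t + k)})"
  proof
    fix x assume x: "x \<in> Pr X t k"
    obtain V g where xv: "x = (V, g)" by fastforce
    have h: "PC X V" "g \<in> V" "length g = t" "card V = Suc (t + k)" using x xv by (auto simp: Pr_def)
    then have "g \<in> Wd X t" by (auto simp: PC_def Wd_def L_def)
    then show "x \<in> (\<Union>g\<in>Wd X t. (\<lambda>V. (V, g)) ` {V. PC X V \<and> g \<in> V \<and> card V = Suc (t + k)})"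
      using h xv by blast
  qed
next
  show "(\<Union>g\<in>Wd X t. (\<lambda>V. (V, g)) ` {V. PC X V \<and> g \<in> V \<and> card V = Suc (t + k)}) \<subseteq> Pr X t k"
    by (auto simp: Pr_def Wd_def)
qed

lemma Pr_count:
  assumes X: "finite X" and p: "p = 2 * card X - 1"
  shows "finite (Pr X t k)" "card (Pr X t k) = card (Wd X t) * rn p (2 * card X + t * (2 * card X - 2)) k"
proof -
  have fW: "finite (Wd X t)" using card_Wd[OF X] by blast
  have inj: "\<And>g. inj (\<lambda>V. (V, g))" by (rule injI) simp
  have fin: "\<And>g. g \<in> Wd X t \<Longrightarrow> finite ((\<lambda>V. (V, g)) ` {V. PC X V \<and> g \<in> V \<and> card V = Suc (t + k)})"
    using fixed_g_count(1)[OF X p] by blast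
  have disj: "\<forall>g\<in>Wd X t. \<forall>h\<in>Wd X t. g \<noteq> h \<longrightarrow>
      (\<lambda>V. (V, g)) ` {V. PC X V \<and> g \<in> V \<and> card V = Suc (t + k)} \<inter> (\<lambda>V. (V, h)) ` {V. PC X V \<and> h \<in> V \<and> card V = Suc (t + k)} = {}"
    by auto
  show "finite (Pr X t k)" unfolding Pr_UN using fW fin by blast
  have "card (Pr X t k) = (\<Sum>g\<in>Wd X t. card ((\<lambda>V. (V, g)) ` {V. PC X V \<and> g \<in> V \<and> card V = Suc (t + k)}))"
    unfolding Pr_UN by (rule card_UN_disjoint) (use fW fin disj in auto)
  also have "\<dots> = (\<Sum>g\<in>Wd X t. rn p (2 * card X + t * (2 * card X - 2)) k)"
  proof (rule sum.cong)
    fix g assume g: "g \<in> Wd X t"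
    show "card ((\<lambda>V. (V, g)) ` {V. PC X V \<and> g \<in> V \<and> card V = Suc (t + k)}) = rn p (2 * card X + t * (2 * card X - 2)) k"
    proof -
      have "inj_on (\<lambda>V. (V, g)) {V. PC X V \<and> g \<in> V \<and> card V = Suc (t + k)}" by (simp add: inj_on_def)
      then have "card ((\<lambda>V. (V, g)) ` {V. PC X V \<and> g \<in> V \<and> card V = Suc (t + k)}) = card {V. PC X V \<and> g \<in> V \<and> card V = Suc (t + k)}"
        by (rule card_image)
      then show ?thesis using fixed_g_count(2)[OF X p g] by simp
    qed
  qed simp
  also have "\<dots> = card (Wd X t) * rn p (2 * card X + t * (2 * card X - 2)) k" by simp
  finally show "card (Pr X t k) = card (Wd X t) * rn p (2 * card X + t * (2 * card X - 2)) k" .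
qed

lemma PC_card_ge: "PC X V \<Longrightarrow> g \<in> V \<Longrightarrow> Suc (length g) \<le> card V"
proof -
  assume pc: "PC X V" and g: "g \<in> V"
  have "card (Pre g) \<le> card V" using PC_Pre[OF pc g] pc by (intro card_mono) (auto simp: PC_def)
  then show ?thesis by (simp only: card_Pre)
qed

lemma M_eq: "M X t k = (\<lambda>(V, g). (Tr V, g)) ` Pr X t k"
proof
  show "M X t k \<subseteq> (\<lambda>(V, g). (Tr V, g)) ` Pr X t k"
  proof
    fix m assume m: "m \<in> M X t k"
    then have mF: "m \<in> FIM X" by (auto simp: M_def)
    then obtain V g where vg: "PC X V" "g \<in> V" "m = (Tr V, g)" unfolding FIM_eq by auto
    have "card (trunk (Tr V) g) = t" "card (Tr V - trunk (Tr V) g) = k" using m vg(3) by (auto simp: M_def)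
    then have "length g = t" "card V - 1 - length g = k" using card_trunk[OF vg(1,2)] by auto
    moreover have "Suc (length g) \<le> card V" by (rule PC_card_ge[OF vg(1,2)])
    ultimately have "(V, g) \<in> Pr X t k" using vg by (auto simp: Pr_def)
    then show "m \<in> (\<lambda>(V, g). (Tr V, g)) ` Pr X t k" using vg(3) by force
  qed
next
  show "(\<lambda>(V, g). (Tr V, g)) ` Pr X t k \<subseteq> M X t k"
  proof
    fix m assume "m \<in> (\<lambda>(V, g). (Tr V, g)) ` Pr X t k"
    then obtain V g where vg: "(V, g) \<in> Pr X t k" "m = (Tr V, g)" by auto
    have h: "PC X V" "g \<in> V" "length g = t" "card V = Suc (t + k)" using vg(1) by (auto simp: Pr_def)
    have "m \<in> FIM X" using Tr_FIM[OF h(1,2)] vg(2) by simp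
    moreover have "card (trunk (Tr V) g) = t" "card (Tr V - trunk (Tr V) g) = k"
      using card_trunk[OF h(1,2)] h(3,4) by auto
    ultimately show "m \<in> M X t k" using vg(2) by (simp add: M_def)
  qed
qed

lemma Pr_sub: "Pr X t k \<subseteq> {(V, g). PC X V \<and> g \<in> V}"
  by (auto simp: Pr_def)

lemma card_M:
  assumes X: "finite X" and p: "p = 2 * card X - 1"
  shows "finite (M X t k)" "card (M X t k) = card (Wd X t) * rn p (2 * card X + t * (2 * card X - 2)) k"
proof -
  show "finite (M X t k)" unfolding M_eq using Pr_count(1)[OF X p] by simp
  have "card (M X t k) = card (Pr X t k)"
    unfolding M_eq by (rule card_image[OF inj_on_subset[OF FIM_inj Pr_sub]])
  then show "card (M X t k) = card (Wd X t) * rn p (2 * card X + t * (2 * card X - 2)) k"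
    using Pr_count(2)[OF X p] by simp
qed

lemma M_sub: "M X t k \<subseteq> FIM X"
  by (auto simp: M_def)

lemma M_disj: "k \<noteq> k' \<Longrightarrow> M X t k \<inter> M X t' k' = {}"
  by (auto simp: M_def)

lemma sphere_eq: "sphere X K = (\<Union>k\<in>{..K div 2}. M X (K - 2 * k) k)"
proof
  show "sphere X K \<subseteq> (\<Union>k\<in>{..K div 2}. M X (K - 2 * k) k)"
  proof
    fix m assume m: "m \<in> sphere X K"
    then have mF: "m \<in> FIM X" and fl: "fim_length X m = K" by (auto simp: sphere_def)
    then obtain V g where vg: "PC X V" "g \<in> V" "m = (Tr V, g)" unfolding FIM_eq by auto
    define k where "k = card V - 1 - length g"
    have ge: "Suc (length g) \<le> card V" by (rule PC_card_ge[OF vg(1,2)])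
    have "fim_length X m = length g + 2 * k" using fim_len[OF vg(1,2)] vg(3) by (simp add: k_def)
    then have K: "K = length g + 2 * k" using fl by simp
    have "m \<in> M X (length g) k"
      using mF vg(3) card_trunk[OF vg(1,2)] by (simp add: M_def k_def)
    moreover have "k \<in> {..K div 2}" "K - 2 * k = length g" using K by auto
    ultimately have "m \<in> M X (K - 2 * k) k" "k \<in> {..K div 2}" by simp_all
    then show "m \<in> (\<Union>k\<in>{..K div 2}. M X (K - 2 * k) k)" by blast
  qed
next
  show "(\<Union>k\<in>{..K div 2}. M X (K - 2 * k) k) \<subseteq> sphere X K"
  proof
    fix m assume "m \<in> (\<Union>k\<in>{..K div 2}. M X (K - 2 * k) k)"
    then obtain k where k: "k \<le> K div 2" "m \<in> M X (K - 2 * k) k" by auto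
    then have mF: "m \<in> FIM X" using M_sub by blast
    then obtain V g where vg: "PC X V" "g \<in> V" "m = (Tr V, g)" unfolding FIM_eq by auto
    have "card (trunk (Tr V) g) = K - 2 * k" "card (Tr V - trunk (Tr V) g) = k"
      using k(2) vg(3) by (auto simp: M_def)
    then have "length g = K - 2 * k" "card V - 1 - length g = k" using card_trunk[OF vg(1,2)] by auto
    then have "fim_length X m = K" using fim_len[OF vg(1,2)] vg(3) k(1) by simp
    then show "m \<in> sphere X K" using mF by (simp add: sphere_def)
  qed
qed

lemma card_sphere:
  assumes X: "finite X" and p: "p = 2 * card X - 1"
  shows "card (sphere X K) = (\<Sum>k\<in>{..K div 2}. card (M X (K - 2 * k) k))"
  unfolding sphere_eq
proof (rule card_UN_disjoint)
  show "finite {..K div 2}" by simp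
  show "\<forall>i\<in>{..K div 2}. finite (M X (K - 2 * i) i)" using card_M(1)[OF X p] by blast
  show "\<forall>i\<in>{..K div 2}. \<forall>j\<in>{..K div 2}. i \<noteq> j \<longrightarrow> M X (K - 2 * i) i \<inter> M X (K - 2 * j) j = {}"
    using M_disj by blast
qed



lemma part1:
  assumes X: "finite X" "X \<noteq> {}" and p: "p = 2 * card X - 1" and t: "t \<ge> 1"
  shows "real (card (M X t k)) = real (p + 1) * real p ^ (t - 1) * R p (2 * p + (t - 1) * (p - 1)) k"
proof -
  obtain n where n: "card X = Suc n" using X by (metis card_0_eq not0_implies_Suc)
  obtain t' where t': "t = Suc t'" using t by (metis Suc_le_D One_nat_def)
  have p1: "p \<ge> 1" using p n by simp
  have wd: "card (Wd X t) = (p + 1) * p ^ (t - 1)" using card_Wd[OF X(1), of t] t' p n by simp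
  have q: "2 * card X + t * (2 * card X - 2) = 2 * p + (t - 1) * (p - 1)"
    using p n t' by (simp add: algebra_simps)
  have c: "card (M X t k) = (p + 1) * p ^ (t - 1) * rn p (2 * p + (t - 1) * (p - 1)) k"
    using card_M(2)[OF X(1) p, of t k] wd q by (simp only:)
  have A: "real (card (M X t k)) = real (p + 1) * real p ^ (t - 1) * real (rn p (2 * p + (t - 1) * (p - 1)) k)"
    unfolding c by (simp only: of_nat_mult of_nat_power)
  have rnR: "real (rn p (2 * p + (t - 1) * (p - 1)) k) = R p (2 * p + (t - 1) * (p - 1)) k"
    using rn_R p1 by simp
  show ?thesis unfolding A rnR by (rule refl)
qed

lemma part2:
  assumes X: "finite X" "X \<noteq> {}" and p: "p = 2 * card X - 1"
  shows "real (card (M X 0 k)) = real (p + 1) / real (k * p + p + 1) * real ((k * p + p + 1) choose k)"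
proof -
  obtain n where n: "card X = Suc n" using X by (metis card_0_eq not0_implies_Suc)
  have p1: "p \<ge> 1" using p n by simp
  have "card (M X 0 k) = rn p (p + 1) k"
    using card_M(2)[OF X(1) p, of 0 k] card_Wd[OF X(1), of 0] p n by simp
  moreover have "real (rn p (p + 1) k) = R p (p + 1) k" using rn_R p1 by simp
  ultimately show ?thesis by (simp add: R_def add.assoc)
qed

theorem mainTheorem4:
  fixes X :: "'a set" and p :: nat
  assumes "finite X" and "X \<noteq> {}" and "p = 2 * card X - 1"
  shows "(\<forall>t k. t \<ge> 1 \<longrightarrow>
            real (card (M X t k)) = real (p + 1) * real p ^ (t - 1) * R p (2 * p + (t - 1) * (p - 1)) k)
       \<and> (\<forall>k. real (card (M X 0 k)) =
            real (p + 1) / real (k * p + p + 1) * real ((k * p + p + 1) choose k))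
       \<and> (\<forall>K. real (card (sphere X K)) =
            (if even K then real (p + 1) / real ((K div 2) * p + p + 1)
                             * real (((K div 2) * p + p + 1) choose (K div 2)) else 0)
            + (\<Sum>k \<in> {k. 2 * k < K}. real (p + 1) * real p ^ (K - 2 * k - 1)
                 * (real (2 * p + (K - 2 * k - 1) * (p - 1))
                    / real (k * p + 2 * p + (K - 2 * k - 1) * (p - 1)))
                 * real ((k * p + 2 * p + (K - 2 * k - 1) * (p - 1)) choose k)))"
proof (intro conjI allI impI)
  fix t k :: nat assume "t \<ge> 1"
  then show "real (card (M X t k)) = real (p + 1) * real p ^ (t - 1) * R p (2 * p + (t - 1) * (p - 1)) k"
    using part1 assms by blast
next
  fix k
  show "real (card (M X 0 k)) = real (p + 1) / real (k * p + p + 1) * real ((k * p + p + 1) choose k)"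
    using part2 assms by blast
next
  fix K :: nat
  let ?f = "\<lambda>k. real (card (M X (K - 2 * k) k))"
  have cs: "real (card (sphere X K)) = (\<Sum>k\<in>{..K div 2}. ?f k)"
    using card_sphere[OF assms(1,3), of K] by simp
  have fin: "finite {k. 2 * k < K}" by (rule finite_subset[of _ "{..K}"]) auto
  have sumsplit: "(\<Sum>k\<in>{..K div 2}. ?f k) = (if even K then ?f (K div 2) else 0) + (\<Sum>k\<in>{k. 2 * k < K}. ?f k)"
  proof (cases "even K")
    case True
    have "{..K div 2} = insert (K div 2) {k. 2 * k < K}" using True by auto
    moreover have "K div 2 \<notin> {k. 2 * k < K}" using True by auto
    ultimately show ?thesis using True fin by simp
  next
    case False
    have "{..K div 2} = {k. 2 * k < K}" using False by auto presburger+
    then show ?thesis using False by simp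
  qed
  have t1: "?f k = real (p + 1) * real p ^ (K - 2 * k - 1)
                 * (real (2 * p + (K - 2 * k - 1) * (p - 1))
                    / real (k * p + 2 * p + (K - 2 * k - 1) * (p - 1)))
                 * real ((k * p + 2 * p + (K - 2 * k - 1) * (p - 1)) choose k)" if k: "k \<in> {k. 2 * k < K}" for k
  proof -
    have "K - 2 * k \<ge> 1" using k by simp
    then have "?f k = real (p + 1) * real p ^ (K - 2 * k - 1) * R p (2 * p + (K - 2 * k - 1) * (p - 1)) k"
      using part1[OF assms] by simp
    then show ?thesis by (simp add: R_def add.assoc)
  qed
  have t0: "even K \<Longrightarrow> ?f (K div 2) = real (p + 1) / real ((K div 2) * p + p + 1)
                             * real (((K div 2) * p + p + 1) choose (K div 2))"
  proof -
    assume "even K"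
    then have "K - 2 * (K div 2) = 0" by simp
    then show ?thesis using part2[OF assms, of "K div 2"] by simp
  qed
  have S: "(\<Sum>k\<in>{k. 2 * k < K}. ?f k) = (\<Sum>k \<in> {k. 2 * k < K}. real (p + 1) * real p ^ (K - 2 * k - 1)
                 * (real (2 * p + (K - 2 * k - 1) * (p - 1))
                    / real (k * p + 2 * p + (K - 2 * k - 1) * (p - 1)))
                 * real ((k * p + 2 * p + (K - 2 * k - 1) * (p - 1)) choose k))"
    by (rule sum.cong[OF refl t1])
  have T0: "(if even K then ?f (K div 2) else 0) = (if even K then real (p + 1) / real ((K div 2) * p + p + 1)
                             * real (((K div 2) * p + p + 1) choose (K div 2)) else 0)"
    using t0 by simp
  show "real (card (sphere X K)) =
            (if even K then real (p + 1) / real ((K div 2) * p + p + 1)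
                             * real (((K div 2) * p + p + 1) choose (K div 2)) else 0)
            + (\<Sum>k \<in> {k. 2 * k < K}. real (p + 1) * real p ^ (K - 2 * k - 1)
                 * (real (2 * p + (K - 2 * k - 1) * (p - 1))
                    / real (k * p + 2 * p + (K - 2 * k - 1) * (p - 1)))
                 * real ((k * p + 2 * p + (K - 2 * k - 1) * (p - 1)) choose k))"
    unfolding cs sumsplit S T0 by (rule refl)
qed

end
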